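(* Let $0<\delta<1$, $\tau>0$, $n,M\ge1$, let $\mathbf S\in\mathbb R^{n\times n}$ with $\|\mathbf S\|_{op}\le C_\psi$, let $\boldsymbol\Upsilon=\mathrm{diag}(\nu_1,\dots,\nu_n)$ with $\nu_j>0$, and let $\boldsymbol\eta\sim N(0,\mathbf I_{nM})$. (i) For fixed $K\in[M]$, $\mathbf Z\in\mathcal M(M,K)$ and nonempty $J\subseteq[n]$, there is an event $\Omega_{1\tau}$ with $\mathbb P(\Omega_{1\tau})\ge1-\delta^\tau$ on which $$\|(\boldsymbol\Pi_{\mathbf Z,K}\otimes(\mathbf W_J\boldsymbol\Upsilon\mathbf S))\boldsymbol\eta\|^2\le 2KC_\psi^2\sum_{j\in J}\nu_j^2+3C_\psi^2\big(\max_{j\in J}\nu_j^2\big)\tau\ln(\delta^{-1}).$$ (ii) There is an event $\Omega_{2\tau}$ with $\mathbb P(\Omega_{2\tau})\ge1-\delta^\tau$ on which, simultaneously for all $K\in[M]$, all $\mathbf Z\in\mathcal M(M,K)$ and all nonempty $J\subseteq[n]$ (hence also for any random choice $\hat K,\hat{\mathbf Z},\hat J$), $$\|(\boldsymbol\Pi_{\mathbf Z,K}\otimes(\mathbf W_J\boldsymbol\Upsilon\mathbf S))\boldsymbol\eta\|^2\le 2KC_\psi^2\sum_{j\in J}\nu_j^2+3C_\psi^2\big(\max_{j\in J}\nu_j^2\big)\Big\{M\ln K+|J|\ln\frac{ne}{|J|}+\ln(Mn)+\tau\ln(\delta^{-1})\Big\}.$$ (iii) If in addition $\nu_1\le\nu_2\le\dots\le\nu_n$,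 then in (i) with $J=\{1,\dots,L\}$ the bound reads $2KC_\psi^2\sum_{j=1}^L\nu_j^2+3C_\psi^2\tau\ln(\delta^{-1})\nu_L^2$, and there is an event (again of probability at least $1-\delta^\tau$) on which, simultaneously for all $K\in[M]$, $\mathbf Z\in\mathcal M(M,K)$ and $L\in[n]$, $$\|(\boldsymbol\Pi_{\mathbf Z,K}\otimes(\mathbf W_{\{1,\dots,L\}}\boldsymbol\Upsilon\mathbf S))\boldsymbol\eta\|^2\le 2KC_\psi^2\sum_{j=1}^L\nu_j^2+3C_\psi^2\nu_L^2\big\{M\ln K+\ln(Mn)+\tau\ln(\delta^{-1})\big\}.$$
   Context: $[m]=\{1,\dots,m\}$. $\mathcal{M}(M,K)$ is the set of clustering matrices $\mathbf{Z}\in\{0,1\}^{M\times K}$ having exactly one entry $1$ in each row and at least one entry $1$ in each column. For $\mathbf{Z}\in\mathcal M(M,K)$, $\boldsymbol{\Pi}_{\mathbf{Z},K}=\mathbf{Z}(\mathbf{Z}^T\mathbf{Z})^{-1}\mathbf{Z}^T$. For $J\subseteq[n]$, $\mathbf{W}_J=\mathrm{diag}(w_1,\dots,w_n)$ with $w_j=1$ if $j\in J$ and $w_j=0$ otherwise. $\otimes$ is the Kronecker product, so $\boldsymbol\Pi_{\mathbf Z,K}\otimes(\mathbf W_J\boldsymbol\Upsilon\mathbf S)$ is an $nM\times nM$ matrix. *)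

theory Defs
  imports "HOL-Probability.Probability" "Jordan_Normal_Form.Gauss_Jordan_Elimination"
begin

text \<open>Conventions: all indices are 0-based. Vectors of R^m are JNF vectors of dimension m;
 matrices are JNF matrices. Index (m, j) of R^{nM} = R^M (x) R^n is m*n + j.\<close>

definition sqnorm :: "real vec \<Rightarrow> real" where
  "sqnorm v = (\<Sum>i<dim_vec v. (v $ i)^2)"

definition op_norm :: "real mat \<Rightarrow> real" where
  "op_norm A = Sup {sqrt (sqnorm (A *\<^sub>v v)) | v. v \<in> carrier_vec (dim_col A) \<and> sqnorm v \<le> 1}"

definition kron :: "'a::times mat \<Rightarrow> 'a mat \<Rightarrow> 'a mat" where
  "kron A B = mat (dim_row A * dim_row B) (dim_col A * dim_col B)
     (\<lambda>(i,j). A $$ (i div dim_row B, j div dim_col B) * B $$ (i mod dim_row B, j mod dim_col B))"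

definition clust_mats :: "nat \<Rightarrow> nat \<Rightarrow> real mat set" where
  "clust_mats M K = {Z. Z \<in> carrier_mat M K
      \<and> (\<forall>i<M. \<forall>k<K. Z $$ (i,k) = 0 \<or> Z $$ (i,k) = 1)
      \<and> (\<forall>i<M. card {k. k < K \<and> Z $$ (i,k) = 1} = 1)
      \<and> (\<forall>k<K. \<exists>i<M. Z $$ (i,k) = 1)}"

definition proj_clust :: "real mat \<Rightarrow> real mat" where
  "proj_clust Z = Z * the (mat_inverse (transpose_mat Z * Z)) * transpose_mat Z"

definition W_mat :: "nat \<Rightarrow> nat set \<Rightarrow> real mat" where
  "W_mat n J = mat_diag n (\<lambda>j. if j \<in> J then 1 else 0)"

definition gauss_space :: "nat \<Rightarrow> (nat \<Rightarrow> real) measure" where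
  "gauss_space m = PiM {..<m} (\<lambda>_. density lborel std_normal_density)"

definition quad :: "nat \<Rightarrow> nat \<Rightarrow> real mat \<Rightarrow> (nat \<Rightarrow> real) \<Rightarrow> real mat \<Rightarrow> nat set \<Rightarrow> (nat \<Rightarrow> real) \<Rightarrow> real" where
  "quad n M S \<nu> Z J \<eta> =
     sqnorm (kron (proj_clust Z) (W_mat n J * mat_diag n \<nu> * S) *\<^sub>v vec (n*M) \<eta>)"

end

theory Submission
  imports Defs
begin


abbreviation N1 :: "real measure" where "N1 \<equiv> density lborel std_normal_density"

lemma nn_N1: "f \<in> borel_measurable borel \<Longrightarrow> (\<integral>\<^sup>+x. f x \<partial>N1) = (\<integral>\<^sup>+x. ennreal (std_normal_density x) * f x \<partial>lborel)"
  by (subst nn_integral_density) auto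

lemma int_normal1: assumes "0 < s" shows "(\<integral>\<^sup>+x. ennreal (normal_density m s x) \<partial>lborel) = 1"
proof -
  interpret prob_space "density lborel (normal_density m s)" using assms by (simp add: prob_space_normal_density)
  have "emeasure (density lborel (normal_density m s)) UNIV = 1"
    using emeasure_space_1 by simp
  then show ?thesis by (simp add: emeasure_density)
qed

lemma mgf1: "(\<integral>\<^sup>+x. ennreal (exp (a*x)) \<partial>N1) = ennreal (exp (a^2/2))"
proof -
  have "(\<integral>\<^sup>+x. ennreal (exp (a*x)) \<partial>N1) = (\<integral>\<^sup>+x. ennreal (std_normal_density x) * ennreal (exp (a*x)) \<partial>lborel)"
    by (rule nn_N1) measurable
  also have "\<dots> = (\<integral>\<^sup>+x. ennreal (exp (a^2/2)) * ennreal (normal_density a 1 x) \<partial>lborel)"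
  proof (rule nn_integral_cong)
    fix x
    have "std_normal_density x * exp (a*x) = exp (a^2/2) * normal_density a 1 x"
      unfolding normal_density_def by (simp add: exp_add[symmetric] power2_eq_square algebra_simps add_divide_distrib diff_divide_distrib)
    then show "ennreal (std_normal_density x) * ennreal (exp (a*x)) = ennreal (exp (a^2/2)) * ennreal (normal_density a 1 x)"
      by (simp add: ennreal_mult[symmetric])
  qed
  also have "\<dots> = ennreal (exp (a^2/2))"
    by (subst nn_integral_cmult) (auto simp: int_normal1)
  finally show ?thesis .
qed

lemma chi1: assumes "0 \<le> b" "b < 1/2"
  shows "(\<integral>\<^sup>+x. ennreal (exp (b*x^2)) \<partial>N1) = ennreal (1 / sqrt (1 - 2*b))"
proof -
  define s where "s = 1 / sqrt (1 - 2*b)"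
  have pos: "0 < 1 - 2*b" using assms by simp
  have s2: "s^2 = 1/(1-2*b)" using pos by (simp add: s_def power_divide)
  have "(\<integral>\<^sup>+x. ennreal (exp (b*x^2)) \<partial>N1) = (\<integral>\<^sup>+x. ennreal (std_normal_density x) * ennreal (exp (b*x^2)) \<partial>lborel)"
    by (rule nn_N1) measurable
  also have "\<dots> = (\<integral>\<^sup>+x. ennreal s * ennreal (normal_density 0 s x) \<partial>lborel)"
  proof (rule nn_integral_cong)
    fix x
    have sp: "0 < s" using pos by (simp add: s_def)
    have "std_normal_density x * exp (b*x^2) = s * normal_density 0 s x"
      unfolding normal_density_def s2 using pos sp
      apply (simp add: exp_add[symmetric] real_sqrt_mult )
      apply (simp add: s_def real_sqrt_divide field_simps)
      apply (simp add: real_sqrt_mult algebra_simps)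
      apply (simp add: field_simps)
      done
    then show "ennreal (std_normal_density x) * ennreal (exp (b*x^2)) = ennreal s * ennreal (normal_density 0 s x)"
      using sp by (simp add: ennreal_mult[symmetric])
  qed
  also have "\<dots> = ennreal s"
    using pos by (subst nn_integral_cmult) (auto simp: int_normal1 s_def)
  finally show ?thesis by (simp add: s_def)
qed


abbreviation GP :: "'i set \<Rightarrow> ('i \<Rightarrow> real) measure" where "GP I \<equiv> PiM I (\<lambda>_. N1)"

lemma prob_N1: "prob_space N1"
  by (rule prob_space_normal_density) simp

lemma prob_GP: "prob_space (GP I)"
  by (rule prob_space_PiM) (rule prob_N1)

lemma psf: "product_sigma_finite (\<lambda>_::'i. N1)"
  unfolding product_sigma_finite_def using prob_N1 prob_space_imp_sigma_finite by blast

lemma mgf_vec: assumes "finite I"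
  shows "(\<integral>\<^sup>+g. ennreal (exp (\<Sum>i\<in>I. w i * g i)) \<partial>GP I) = ennreal (exp (\<Sum>i\<in>I. (w i)^2/2))"
proof -
  interpret product_sigma_finite "\<lambda>_::'a. N1" by (rule psf)
  have "(\<integral>\<^sup>+g. ennreal (exp (\<Sum>i\<in>I. w i * g i)) \<partial>GP I) = (\<integral>\<^sup>+g. (\<Prod>i\<in>I. (\<lambda>i x. ennreal (exp (w i * x))) i (g i)) \<partial>GP I)"
    using assms by (intro nn_integral_cong) (simp add: exp_sum prod_ennreal)
  also have "\<dots> = (\<Prod>i\<in>I. (\<integral>\<^sup>+x. ennreal (exp (w i * x)) \<partial>N1))"
    by (rule product_nn_integral_prod) (use assms in auto)
  also have "\<dots> = (\<Prod>i\<in>I. ennreal (exp ((w i)^2/2)))"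
    by (simp add: mgf1)
  also have "\<dots> = ennreal (exp (\<Sum>i\<in>I. (w i)^2/2))"
    using assms by (simp add: exp_sum prod_ennreal)
  finally show ?thesis .
qed

lemma HS: assumes I: "finite I" and K: "finite Kk" and mu: "0 \<le> \<mu>"
  shows "(\<integral>\<^sup>+h. ennreal (exp (\<mu> * (\<Sum>i\<in>I. (\<Sum>k\<in>Kk. V i k * h k)^2))) \<partial>GP Kk)
       = (\<integral>\<^sup>+g. ennreal (exp (\<mu> * (\<Sum>k\<in>Kk. (\<Sum>i\<in>I. V i k * g i)^2))) \<partial>GP I)"
proof -
  define c where "c = sqrt (2*\<mu>)"
  have c2: "c^2 = 2*\<mu>" using mu by (simp add: c_def)
  define F where "F = (\<lambda>h g. ennreal (exp (\<Sum>i\<in>I. \<Sum>k\<in>Kk. c * V i k * h k * g i)))"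
  interpret p1: prob_space "GP Kk" by (rule prob_GP)
  interpret p2: prob_space "GP I" by (rule prob_GP)
  interpret pair_sigma_finite "GP Kk" "GP I"
    by (simp add: pair_sigma_finite_def p1.sigma_finite_measure_axioms p2.sigma_finite_measure_axioms)
  have inner1: "(\<integral>\<^sup>+g. F h g \<partial>GP I) = ennreal (exp (\<mu> * (\<Sum>i\<in>I. (\<Sum>k\<in>Kk. V i k * h k)^2)))" for h
  proof -
    have "(\<integral>\<^sup>+g. F h g \<partial>GP I) = (\<integral>\<^sup>+g. ennreal (exp (\<Sum>i\<in>I. (c * (\<Sum>k\<in>Kk. V i k * h k)) * g i)) \<partial>GP I)"
      unfolding F_def by (rule nn_integral_cong) (simp add: sum_distrib_left sum_distrib_right mult.assoc)
    also have "\<dots> = ennreal (exp (\<Sum>i\<in>I. (c * (\<Sum>k\<in>Kk. V i k * h k))^2/2))"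
      by (rule mgf_vec[OF I])
    also have "(\<Sum>i\<in>I. (c * (\<Sum>k\<in>Kk. V i k * h k))^2/2) = \<mu> * (\<Sum>i\<in>I. (\<Sum>k\<in>Kk. V i k * h k)^2)"
      unfolding sum_distrib_left[of \<mu>] by (rule sum.cong) (simp_all add: power_mult_distrib c2)
    finally show ?thesis .
  qed
  have inner2: "(\<integral>\<^sup>+h. F h g \<partial>GP Kk) = ennreal (exp (\<mu> * (\<Sum>k\<in>Kk. (\<Sum>i\<in>I. V i k * g i)^2)))" for g
  proof -
    have "(\<integral>\<^sup>+h. F h g \<partial>GP Kk) = (\<integral>\<^sup>+h. ennreal (exp (\<Sum>k\<in>Kk. (c * (\<Sum>i\<in>I. V i k * g i)) * h k)) \<partial>GP Kk)"
      unfolding F_def by (rule nn_integral_cong) (simp add: sum_distrib_left sum_distrib_right mult_ac sum.swap[of _ I])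
    also have "\<dots> = ennreal (exp (\<Sum>k\<in>Kk. (c * (\<Sum>i\<in>I. V i k * g i))^2/2))"
      by (rule mgf_vec[OF K])
    also have "(\<Sum>k\<in>Kk. (c * (\<Sum>i\<in>I. V i k * g i))^2/2) = \<mu> * (\<Sum>k\<in>Kk. (\<Sum>i\<in>I. V i k * g i)^2)"
      unfolding sum_distrib_left[of \<mu>] by (rule sum.cong) (simp_all add: power_mult_distrib c2)
    finally show ?thesis .
  qed
  have meas: "case_prod F \<in> borel_measurable (GP Kk \<Otimes>\<^sub>M GP I)"
    unfolding F_def by measurable
  have "(\<integral>\<^sup>+h. ennreal (exp (\<mu> * (\<Sum>i\<in>I. (\<Sum>k\<in>Kk. V i k * h k)^2))) \<partial>GP Kk) = (\<integral>\<^sup>+h. (\<integral>\<^sup>+g. F h g \<partial>GP I) \<partial>GP Kk)"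
    by (simp add: inner1)
  also have "\<dots> = (\<integral>\<^sup>+g. (\<integral>\<^sup>+h. F h g \<partial>GP Kk) \<partial>GP I)"
    by (rule Fubini'[OF meas, symmetric])
  also have "\<dots> = (\<integral>\<^sup>+g. ennreal (exp (\<mu> * (\<Sum>k\<in>Kk. (\<Sum>i\<in>I. V i k * g i)^2))) \<partial>GP I)"
    by (simp add: inner2)
  finally show ?thesis .
qed


lemma scal_ineq: fixes u :: real assumes "0 \<le> u" "u \<le> 2/3"
  shows "1 / sqrt (1 - u) \<le> exp u"
proof -
  have e: "1 + 2*u + (2*u)^2/2 \<le> exp (2*u)" using assms by (intro exp_lower_Taylor_quadratic) simp
  have h1: "u*u \<le> 4/9" using mult_mono[of u "2/3" u "2/3"] assms by auto
  have "u^3 \<le> u * (2/3)^2" using mult_left_mono[OF h1, of u] assms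
    by (simp add: power3_eq_cube mult.assoc power2_eq_square)
  then have "1 \<le> (1-u) * (1 + 2*u + (2*u)^2/2)" using assms
    by (simp add: algebra_simps power2_eq_square power3_eq_cube)
  also have "\<dots> \<le> (1-u) * exp (2*u)" using e assms by (intro mult_left_mono) auto
  also have "exp (2*u) = (exp u)^2" by (simp add: power2_eq_square exp_add[symmetric])
  finally have "1 \<le> (sqrt (1-u) * exp u)^2" using assms by (simp add: power_mult_distrib)
  moreover have nn: "0 \<le> sqrt (1-u) * exp u" using assms by simp
  ultimately have h: "1 \<le> sqrt (1-u) * exp u"
    using power2_le_imp_le[of 1 "sqrt (1-u) * exp u"] by simp
  have sp: "0 < sqrt (1-u)" using assms by simp
  show ?thesis using sp h by (simp add: pos_divide_le_eq mult.commute)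
qed

lemma chi_vec: assumes I: "finite I" and a: "\<And>i. i \<in> I \<Longrightarrow> 0 \<le> a i" and mu: "0 \<le> \<mu>"
  and small: "\<And>i. i \<in> I \<Longrightarrow> 2*\<mu>*a i \<le> 2/3"
  shows "(\<integral>\<^sup>+g. ennreal (exp (\<mu> * (\<Sum>i\<in>I. a i * (g i)^2))) \<partial>GP I) \<le> ennreal (exp (2*\<mu>*(\<Sum>i\<in>I. a i)))"
proof -
  interpret product_sigma_finite "\<lambda>_::'a. N1" by (rule psf)
  have sm: "0 \<le> \<mu>*a i \<and> 2*(\<mu>*a i) < 1" if "i \<in> I" for i
  proof -
    have "0 \<le> \<mu>*a i" using a[OF that] mu by simp
    moreover have "2*\<mu>*a i \<le> 2/3" using small[OF that] .
    ultimately show ?thesis by (simp add: mult.assoc)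
  qed
  have "(\<integral>\<^sup>+g. ennreal (exp (\<mu> * (\<Sum>i\<in>I. a i * (g i)^2))) \<partial>GP I) = (\<integral>\<^sup>+g. (\<Prod>i\<in>I. (\<lambda>i x. ennreal (exp ((\<mu> * a i) * x^2))) i (g i)) \<partial>GP I)"
    using I by (intro nn_integral_cong) (simp add: exp_sum prod_ennreal sum_distrib_left mult.assoc)
  also have "\<dots> = (\<Prod>i\<in>I. (\<integral>\<^sup>+x. ennreal (exp ((\<mu> * a i) * x^2)) \<partial>N1))"
    by (rule product_nn_integral_prod) (use I in auto)
  also have "\<dots> = (\<Prod>i\<in>I. ennreal (1 / sqrt (1 - 2*(\<mu> * a i))))"
    using sm by (intro prod.cong refl chi1) (auto simp: mult.commute mult.left_commute)
  also have "\<dots> = ennreal (\<Prod>i\<in>I. 1 / sqrt (1 - 2*(\<mu> * a i)))"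
  proof (intro prod_ennreal)
    fix i assume "i \<in> I" then show "0 \<le> 1 / sqrt (1 - 2*(\<mu> * a i))" using sm[of i] by simp
  qed
  also have "\<dots> \<le> ennreal (\<Prod>i\<in>I. exp (2*\<mu>*a i))"
  proof (intro ennreal_leI prod_mono conjI)
    fix i assume i: "i \<in> I"
    show "0 \<le> 1 / sqrt (1 - 2*(\<mu> * a i))" using sm[OF i] by simp
    show "1 / sqrt (1 - 2*(\<mu> * a i)) \<le> exp (2*\<mu>*a i)"
      using scal_ineq[of "2*(\<mu>*a i)"] sm[OF i] small[OF i] by (simp add: mult.assoc)
  qed
  also have "\<dots> = ennreal (exp (2*\<mu>*(\<Sum>i\<in>I. a i)))"
    using I by (simp add: exp_sum sum_distrib_left)
  finally show ?thesis .
qed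


lemma sqnorm_vec: "sqnorm (vec n f) = (\<Sum>i<n. (f i)^2)"
  by (simp add: sqnorm_def)

lemma mult_vec_idx: assumes "S \<in> carrier_mat m n" "i < m"
  shows "(S *\<^sub>v vec n f) $ i = (\<Sum>j<n. S $$ (i,j) * f j)"
  using assms by (simp add: scalar_prod_def atLeast0LessThan row_def)

lemma sqnorm_Sv: assumes "S \<in> carrier_mat m n"
  shows "sqnorm (S *\<^sub>v vec n f) = (\<Sum>i<m. (\<Sum>j<n. S $$ (i,j) * f j)^2)"
  unfolding sqnorm_def using assms by (intro sum.cong) (simp_all add: mult_vec_idx del: index_mult_mat_vec)

lemma opn_bdd: assumes S: "S \<in> carrier_mat n n"
  shows "bdd_above {sqrt (sqnorm (S *\<^sub>v v)) | v. v \<in> carrier_vec (dim_col S) \<and> sqnorm v \<le> 1}"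
proof -
  define B where "B = sqrt (\<Sum>i<n. (\<Sum>j<n. \<bar>S $$ (i,j)\<bar>)^2)"
  show ?thesis unfolding bdd_above_def
  proof (intro exI[of _ B] ballI)
    fix x assume "x \<in> {sqrt (sqnorm (S *\<^sub>v v)) | v. v \<in> carrier_vec (dim_col S) \<and> sqnorm v \<le> 1}"
    then obtain v where v: "v \<in> carrier_vec n" "sqnorm v \<le> 1" and x: "x = sqrt (sqnorm (S *\<^sub>v v))"
      using S by auto
    have vj: "\<bar>v $ j\<bar> \<le> 1" if "j < n" for j
    proof -
      have "(v $ j)^2 \<le> (\<Sum>i<n. (v $ i)^2)" using that
        by (intro member_le_sum) auto
      also have "\<dots> \<le> 1" using v by (simp add: sqnorm_def)
      finally show ?thesis by (simp add: abs_square_le_1)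
    qed
    have vv: "v = vec n (\<lambda>j. v $ j)" using v by auto
    have "sqnorm (S *\<^sub>v v) = (\<Sum>i<n. (\<Sum>j<n. S $$ (i,j) * v $ j)^2)"
      using sqnorm_Sv[OF S] vv by metis
    also have "\<dots> \<le> (\<Sum>i<n. (\<Sum>j<n. \<bar>S $$ (i,j)\<bar>)^2)"
    proof (intro sum_mono)
      fix i assume "i \<in> {..<n}"
      have "\<bar>\<Sum>j<n. S $$ (i,j) * v $ j\<bar> \<le> (\<Sum>j<n. \<bar>S $$ (i,j) * v $ j\<bar>)" by (rule sum_abs)
      also have "\<dots> \<le> (\<Sum>j<n. \<bar>S $$ (i,j)\<bar>)"
        using vj by (intro sum_mono) (auto simp: abs_mult intro: mult_left_le)
      finally show "(\<Sum>j<n. S $$ (i,j) * v $ j)^2 \<le> (\<Sum>j<n. \<bar>S $$ (i,j)\<bar>)^2"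
        using power_mono[of "\<bar>\<Sum>j<n. S $$ (i,j) * v $ j\<bar>" _ 2] by simp
    qed
    finally show "x \<le> B" unfolding x B_def by simp
  qed
qed

lemma opn_bound: assumes S: "S \<in> carrier_mat n n" and C: "op_norm S \<le> C"
  shows "(\<Sum>i<n. (\<Sum>j<n. S $$ (i,j) * f j)^2) \<le> C^2 * (\<Sum>j<n. (f j)^2)" and "0 \<le> C"
proof -
  let ?A = "{sqrt (sqnorm (S *\<^sub>v v)) | v. v \<in> carrier_vec (dim_col S) \<and> sqnorm v \<le> 1}"
  have mem: "sqrt (sqnorm (S *\<^sub>v v)) \<le> C" if "v \<in> carrier_vec n" "sqnorm v \<le> 1" for v
  proof -
    have "sqrt (sqnorm (S *\<^sub>v v)) \<le> Sup ?A"
      using that S by (intro cSup_upper opn_bdd[OF S]) auto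
    then show ?thesis using C unfolding op_norm_def by simp
  qed
  have z: "sqnorm (S *\<^sub>v 0\<^sub>v n) = 0" using S by (simp add: sqnorm_def scalar_prod_def)
  show C0: "0 \<le> C" using mem[of "0\<^sub>v n"] z by (simp add: sqnorm_def)
  define t where "t = (\<Sum>j<n. (f j)^2)"
  show "(\<Sum>i<n. (\<Sum>j<n. S $$ (i,j) * f j)^2) \<le> C^2 * (\<Sum>j<n. (f j)^2)"
  proof (cases "t = 0")
    case True
    then have "\<forall>j<n. f j = 0" unfolding t_def by (simp add: sum_nonneg_eq_0_iff)
    then show ?thesis by simp
  next
    case False
    have "0 \<le> t" unfolding t_def by (intro sum_nonneg) auto
    then have tp: "0 < t" using False by simp
    define g where "g j = f j / sqrt t" for j
    have "sqnorm (vec n g) = 1" using tp by (simp add: sqnorm_vec g_def power_divide t_def sum_divide_distrib[symmetric])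
    then have "sqrt (sqnorm (S *\<^sub>v vec n g)) \<le> C" by (intro mem) auto
    moreover have nn: "0 \<le> sqnorm (S *\<^sub>v vec n g)" by (simp add: sqnorm_def sum_nonneg)
    ultimately have sC: "(sqrt (sqnorm (S *\<^sub>v vec n g)))^2 \<le> C^2"
      by (intro power_mono) auto
    have "sqnorm (S *\<^sub>v vec n g) \<le> C^2" using sC nn by simp
    moreover have "sqnorm (S *\<^sub>v vec n g) = (\<Sum>i<n. (\<Sum>j<n. S $$ (i,j) * f j)^2) / t"
      using tp by (simp add: sqnorm_Sv[OF S] g_def sum_divide_distrib[symmetric] power_divide)
    ultimately show ?thesis using tp by (simp add: t_def divide_le_eq)
  qed
qed

lemma opn_bound_T: assumes S: "S \<in> carrier_mat n n" and C: "op_norm S \<le> C"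
  shows "(\<Sum>j'<n. (\<Sum>j<n. S $$ (j,j') * y j)^2) \<le> C^2 * (\<Sum>j<n. (y j)^2)"
proof -
  define z where "z j' = (\<Sum>j<n. S $$ (j,j') * y j)" for j'
  define Z where "Z = (\<Sum>j'<n. (z j')^2)"
  define Y where "Y = (\<Sum>j<n. (y j)^2)"
  have C0: "0 \<le> C" using opn_bound[OF S C] by simp
  have "Z = (\<Sum>j'<n. z j' * (\<Sum>j<n. S $$ (j,j') * y j))" unfolding Z_def z_def by (simp add: power2_eq_square)
  also have "\<dots> = (\<Sum>j<n. y j * (\<Sum>j'<n. S $$ (j,j') * z j'))"
    by (simp only: sum_distrib_left) (subst sum.swap, simp add: mult_ac)
  finally have Z1: "Z = \<dots>" .
  have "Z^2 \<le> Y * (\<Sum>j<n. (\<Sum>j'<n. S $$ (j,j') * z j')^2)"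
    unfolding Z1 Y_def by (rule Cauchy_Schwarz_ineq_sum)
  also have "\<dots> \<le> Y * (C^2 * Z)"
    unfolding Z_def by (intro mult_left_mono opn_bound[OF S C]) (auto simp: Y_def intro: sum_nonneg)
  finally have "Z * Z \<le> (Y * C^2) * Z" by (simp add: power2_eq_square mult_ac)
  moreover have "0 \<le> Z" unfolding Z_def by (intro sum_nonneg) auto
  moreover have "0 \<le> Y * C^2" unfolding Y_def by (intro mult_nonneg_nonneg sum_nonneg) auto
  ultimately have "Z \<le> Y * C^2"
  proof (cases "Z = 0")
    case False
    with \<open>0 \<le> Z\<close> have "0 < Z" by simp
    with \<open>Z * Z \<le> (Y * C^2) * Z\<close> show ?thesis by (rule mult_right_le_imp_le)
  qed simp
  then show ?thesis unfolding Z_def Y_def z_def by (simp add: mult.commute)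
qed


definition cl :: "real mat \<Rightarrow> nat \<Rightarrow> nat \<Rightarrow> nat" where
  "cl Z K i = (THE k. k < K \<and> Z $$ (i,k) = 1)"

definition sz :: "real mat \<Rightarrow> nat \<Rightarrow> nat \<Rightarrow> nat \<Rightarrow> nat" where
  "sz Z M K c = card {i. i < M \<and> cl Z K i = c}"

lemma cl_props: assumes Z: "Z \<in> clust_mats M K" and i: "i < M"
  shows "cl Z K i < K" "Z $$ (i, cl Z K i) = 1" "\<And>k. k < K \<Longrightarrow> Z $$ (i,k) = (if k = cl Z K i then 1 else 0)"
proof -
  from Z i have "card {k. k < K \<and> Z $$ (i,k) = 1} = 1" unfolding clust_mats_def by auto
  then obtain k0 where k0: "{k. k < K \<and> Z $$ (i,k) = 1} = {k0}" by (rule card_1_singletonE)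
  then have th: "cl Z K i = k0" unfolding cl_def by (intro the_equality) auto
  from k0 show "cl Z K i < K" "Z $$ (i, cl Z K i) = 1" unfolding th by auto
  fix k assume k: "k < K"
  have "Z $$ (i,k) = 0 \<or> Z $$ (i,k) = 1" using Z i k unfolding clust_mats_def by auto
  then show "Z $$ (i,k) = (if k = cl Z K i then 1 else 0)" using k0 k th by auto
qed

lemma sz_pos: assumes Z: "Z \<in> clust_mats M K" and c: "c < K" shows "0 < sz Z M K c"
proof -
  from Z c obtain i where i: "i < M" "Z $$ (i,c) = 1" unfolding clust_mats_def by blast
  then have "cl Z K i = c" using cl_props(3)[OF Z i(1) c] by (auto split: if_splits)
  then have "i \<in> {i. i < M \<and> cl Z K i = c}" using i by auto
  then show ?thesis unfolding sz_def by (subst card_gt_0_iff) auto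
qed

lemma Z_carrier: "Z \<in> clust_mats M K \<Longrightarrow> Z \<in> carrier_mat M K"
  unfolding clust_mats_def by auto

lemma ZtZ: assumes Z: "Z \<in> clust_mats M K"
  shows "transpose_mat Z * Z = mat_diag K (\<lambda>c. real (sz Z M K c))"
proof (rule eq_matI)
  have ZC: "Z \<in> carrier_mat M K" by (rule Z_carrier[OF Z])
  show "dim_row (transpose_mat Z * Z) = dim_row (mat_diag K (\<lambda>c. real (sz Z M K c)))"
       "dim_col (transpose_mat Z * Z) = dim_col (mat_diag K (\<lambda>c. real (sz Z M K c)))"
    using ZC by (auto simp: mat_diag_def)
  fix c c' assume cc: "c < dim_row (mat_diag K (\<lambda>c. real (sz Z M K c)))" "c' < dim_col (mat_diag K (\<lambda>c. real (sz Z M K c)))"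
  then have c: "c < K" "c' < K" by (auto simp: mat_diag_def)
  have "(transpose_mat Z * Z) $$ (c,c') = (\<Sum>i<M. Z $$ (i,c) * Z $$ (i,c'))"
    using ZC c by (simp add: scalar_prod_def atLeast0LessThan)
  also have "\<dots> = (\<Sum>i<M. if cl Z K i = c \<and> c = c' then 1 else 0)"
    using c by (intro sum.cong refl) (auto simp: cl_props(3)[OF Z])
  also have "\<dots> = (if c = c' then real (sz Z M K c) else 0)"
    by (auto simp: sum.If_cases sz_def Int_def conj_commute)
  finally show "(transpose_mat Z * Z) $$ (c,c') = mat_diag K (\<lambda>c. real (sz Z M K c)) $$ (c,c')"
    using c by (simp add: mat_diag_def)
qed

lemma inv_diag: assumes Z: "Z \<in> clust_mats M K"
  shows "the (mat_inverse (transpose_mat Z * Z)) = mat_diag K (\<lambda>c. 1 / real (sz Z M K c))"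
proof -
  let ?A = "mat_diag K (\<lambda>c. real (sz Z M K c))"
  let ?B = "mat_diag K (\<lambda>c. 1 / real (sz Z M K c))"
  have AB: "?A * ?B = 1\<^sub>m K" "?B * ?A = 1\<^sub>m K"
    unfolding mat_diag_diag using sz_pos[OF Z] by (auto intro!: eq_matI simp: mat_diag_def) (metis less_irrefl)+
  have U: "?A \<in> Units (ring_mat TYPE(real) K ())"
    unfolding Units_def ring_mat_def using AB by (auto intro!: bexI[of _ ?B])
  show ?thesis
  proof (cases "mat_inverse ?A")
    case None
    have "?A \<notin> Units (ring_mat TYPE(real) K ())" by (rule mat_inverse(1)[OF mat_diag_dim None])
    then show ?thesis using U by blast
  next
    case (Some B)
    from mat_inverse(2)[OF mat_diag_dim Some]
    have B: "?A * B = 1\<^sub>m K" "B \<in> carrier_mat K K" by auto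
    have "B = (?B * ?A) * B" unfolding AB(2) using B(2) by simp
    also have "\<dots> = ?B * (?A * B)" using B by (intro assoc_mult_mat) (auto simp: mat_diag_def)
    also have "\<dots> = ?B" using B by (simp add: right_mult_one_mat[OF mat_diag_dim])
    finally show ?thesis using Some by (simp add: ZtZ[OF Z])
  qed
qed

lemma proj_entry: assumes Z: "Z \<in> clust_mats M K" and i: "i < M" and i': "i' < M"
  shows "proj_clust Z $$ (i,i') = (if cl Z K i = cl Z K i' then 1 / real (sz Z M K (cl Z K i)) else 0)"
    and "proj_clust Z \<in> carrier_mat M M"
proof -
  have ZC: "Z \<in> carrier_mat M K" by (rule Z_carrier[OF Z])
  let ?f = "\<lambda>c. 1 / real (sz Z M K c)"
  have P: "proj_clust Z = (Z * mat_diag K ?f) * transpose_mat Z"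
    unfolding proj_clust_def inv_diag[OF Z] ..
  show "proj_clust Z \<in> carrier_mat M M" unfolding P using ZC by auto
  have "proj_clust Z $$ (i,i') = (\<Sum>c<K. (Z $$ (i,c) * ?f c) * Z $$ (i',c))"
    unfolding P using ZC i i' by (simp add: mat_diag_mult_right[OF ZC] scalar_prod_def atLeast0LessThan)
  also have "\<dots> = (\<Sum>c<K. if c = cl Z K i then (if cl Z K i = cl Z K i' then ?f c else 0) else 0)"
    using i i' by (intro sum.cong refl) (auto simp: cl_props(3)[OF Z])
  also have "\<dots> = (if cl Z K i = cl Z K i' then ?f (cl Z K i) else 0)"
    using cl_props(1)[OF Z i] by (simp add: sum.delta)
  finally show "proj_clust Z $$ (i,i') = (if cl Z K i = cl Z K i' then 1 / real (sz Z M K (cl Z K i)) else 0)" .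
qed


lemma shift_blk: fixes f :: "nat \<Rightarrow> 'a::comm_monoid_add" and n m :: nat
  shows "(\<Sum>k\<in>{m*n..<m*n+n}. f k) = (\<Sum>j<n. f (m*n+j))"
  using sum.shift_bounds_nat_ivl[of f 0 "m*n" n] by (simp add: add.commute atLeast0LessThan)

lemma sum_split: fixes f :: "nat \<Rightarrow> 'a::comm_monoid_add" and n M :: nat
  shows "(\<Sum>k<n*M. f k) = (\<Sum>m<M. \<Sum>j<n. f (m*n+j))"
proof -
  have "(\<Sum>k<n*M. f k) = (\<Sum>m<M. \<Sum>k\<in>{m*n..<m*n+n}. f k)"
    using sum.nat_group[of f n M] by (simp add: mult.commute)
  also have "\<dots> = (\<Sum>m<M. \<Sum>j<n. f (m*n+j))"
    by (intro sum.cong refl shift_blk)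
  finally show ?thesis .
qed

lemma divmod_idx: fixes j n m :: nat assumes "j < n" shows "(m*n+j) div n = m" "(m*n+j) mod n = j"
proof -
  have "n \<noteq> 0" using assms by simp
  then show "(m*n+j) div n = m" "(m*n+j) mod n = j" using assms by (simp_all add: add.commute)
qed

lemma idx_lt: fixes m M j n :: nat assumes "m < M" "j < n" shows "m*n+j < M*n"
proof -
  have "(m+1)*n \<le> M*n" using mult_le_mono1[of "m+1" M n] assms by simp
  then show ?thesis using assms by (simp add: algebra_simps)
qed

lemma group_cl: assumes Z: "Z \<in> clust_mats M K"
  shows "(\<Sum>m<M. F (cl Z K m) / real (sz Z M K (cl Z K m))) = (\<Sum>c<K. F c)"
proof -
  have "(\<Sum>m<M. F (cl Z K m) / real (sz Z M K (cl Z K m)))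
     = (\<Sum>c<K. \<Sum>m\<in>{m. m \<in> {..<M} \<and> cl Z K m = c}. F (cl Z K m) / real (sz Z M K (cl Z K m)))"
    using cl_props(1)[OF Z] by (intro sum.group[symmetric]) auto
  also have "\<dots> = (\<Sum>c<K. real (sz Z M K c) * (F c / real (sz Z M K c)))"
    by (intro sum.cong refl) (simp add: sz_def)
  also have "\<dots> = (\<Sum>c<K. F c)"
    using sz_pos[OF Z] by (intro sum.cong refl) simp
  finally show ?thesis .
qed

definition dd :: "nat set \<Rightarrow> (nat \<Rightarrow> real) \<Rightarrow> nat \<Rightarrow> real" where
  "dd J \<nu> j = (if j \<in> J then \<nu> j else 0)"

lemma A_entry: assumes S: "S \<in> carrier_mat n n" and j: "j < n" "j' < n"
  shows "(W_mat n J * mat_diag n \<nu> * S) $$ (j,j') = dd J \<nu> j * S $$ (j,j')"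
    and "W_mat n J * mat_diag n \<nu> * S \<in> carrier_mat n n"
proof -
  have e: "W_mat n J * mat_diag n \<nu> = mat_diag n (dd J \<nu>)"
    unfolding W_mat_def mat_diag_diag by (auto intro!: eq_matI simp: mat_diag_def dd_def)
  show "(W_mat n J * mat_diag n \<nu> * S) $$ (j,j') = dd J \<nu> j * S $$ (j,j')"
    unfolding e mat_diag_mult_left[OF S] using j by simp
  show "W_mat n J * mat_diag n \<nu> * S \<in> carrier_mat n n" unfolding e by (rule mult_carrier_mat[OF mat_diag_dim S])
qed

definition Bm where "Bm n S \<nu> Z J = kron (proj_clust Z) (W_mat n J * mat_diag n \<nu> * S)"

lemma Bm_entry: assumes Z: "Z \<in> clust_mats M K" and S: "S \<in> carrier_mat n n"
  and m: "m < M" "m' < M" and j: "j < n" "j' < n"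
  shows "Bm n S \<nu> Z J $$ (m*n+j, m'*n+j') = proj_clust Z $$ (m,m') * (dd J \<nu> j * S $$ (j,j'))"
    and "Bm n S \<nu> Z J \<in> carrier_mat (n*M) (n*M)"
proof -
  have P: "proj_clust Z \<in> carrier_mat M M" by (rule proj_entry(2)[OF Z m(1) m(1)])
  have A: "W_mat n J * mat_diag n \<nu> * S \<in> carrier_mat n n" by (rule A_entry(2)[OF S j])
  have lt: "m*n+j < M*n" "m'*n+j' < M*n" using idx_lt m j by auto
  show "Bm n S \<nu> Z J $$ (m*n+j, m'*n+j') = proj_clust Z $$ (m,m') * (dd J \<nu> j * S $$ (j,j'))"
  proof -
    have dA: "dim_row (W_mat n J * mat_diag n \<nu> * S) = n" "dim_col (W_mat n J * mat_diag n \<nu> * S) = n" using A by auto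
    have dP: "dim_row (proj_clust Z) = M" "dim_col (proj_clust Z) = M" using P by auto
    have "Bm n S \<nu> Z J $$ (m*n+j, m'*n+j') = proj_clust Z $$ ((m*n+j) div n, (m'*n+j') div n) *
       (W_mat n J * mat_diag n \<nu> * S) $$ ((m*n+j) mod n, (m'*n+j') mod n)"
      unfolding Bm_def kron_def dA dP using lt by (simp add: mult.commute)
    then show ?thesis using j by (simp add: divmod_idx A_entry(1)[OF S])
  qed
  show "Bm n S \<nu> Z J \<in> carrier_mat (n*M) (n*M)" unfolding Bm_def kron_def using P A S by (auto simp: mult.commute W_mat_def mat_diag_def)
qed


definition V2 :: "nat \<Rightarrow> real mat \<Rightarrow> nat \<Rightarrow> nat \<Rightarrow> nat set \<Rightarrow> (nat \<Rightarrow> real) \<Rightarrow> nat \<times> nat \<Rightarrow> nat \<Rightarrow> real" where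
  "V2 n Z M K J \<nu> q k = (if k mod n = snd q \<and> cl Z K (k div n) = fst q
      then dd J \<nu> (snd q) / sqrt (real (sz Z M K (fst q))) else 0)"

definition Qs :: "nat \<Rightarrow> real mat \<Rightarrow> nat \<Rightarrow> nat \<Rightarrow> (nat \<Rightarrow> real) \<Rightarrow> nat \<Rightarrow> nat \<Rightarrow> real" where
  "Qs n Z M K h j c = (\<Sum>m<M. if cl Z K m = c then h (m*n+j) else 0)"

lemma V2_row: assumes Z: "Z \<in> clust_mats M K" and c: "c < K" and j: "j < n"
  shows "(\<Sum>k<n*M. V2 n Z M K J \<nu> (c,j) k * h k) = dd J \<nu> j / sqrt (real (sz Z M K c)) * Qs n Z M K h j c"
proof -
  have "(\<Sum>k<n*M. V2 n Z M K J \<nu> (c,j) k * h k) = (\<Sum>m<M. \<Sum>j2<n. V2 n Z M K J \<nu> (c,j) (m*n+j2) * h (m*n+j2))"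
    by (rule sum_split)
  also have "\<dots> = (\<Sum>m<M. if cl Z K m = c then dd J \<nu> j / sqrt (real (sz Z M K c)) * h (m*n+j) else 0)"
  proof (intro sum.cong refl)
    fix m assume "m \<in> {..<M}"
    have "(\<Sum>j2<n. V2 n Z M K J \<nu> (c,j) (m*n+j2) * h (m*n+j2))
        = (\<Sum>j2<n. if j2 = j then (if cl Z K m = c then dd J \<nu> j / sqrt (real (sz Z M K c)) * h (m*n+j) else 0) else 0)"
      by (intro sum.cong refl) (auto simp: V2_def divmod_idx)
    also have "\<dots> = (if cl Z K m = c then dd J \<nu> j / sqrt (real (sz Z M K c)) * h (m*n+j) else 0)"
      using j by (simp add: sum.delta)
    finally show "(\<Sum>j2<n. V2 n Z M K J \<nu> (c,j) (m*n+j2) * h (m*n+j2)) = \<dots>" .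
  qed
  also have "\<dots> = dd J \<nu> j / sqrt (real (sz Z M K c)) * Qs n Z M K h j c"
    unfolding Qs_def sum_distrib_left by (intro sum.cong refl) auto
  finally show ?thesis .
qed

lemma proj_apply: assumes Z: "Z \<in> clust_mats M K" and m': "m' < M"
  shows "(\<Sum>m<M. proj_clust Z $$ (m,m') * x m) = (\<Sum>m<M. if cl Z K m = cl Z K m' then x m else 0) / real (sz Z M K (cl Z K m'))"
  unfolding sum_divide_distrib using m'
  by (intro sum.cong refl) (auto simp: proj_entry(1)[OF Z])

lemma det_ineq: assumes Z: "Z \<in> clust_mats M K" and S: "S \<in> carrier_mat n n" and C: "op_norm S \<le> C"
  shows "(\<Sum>k<n*M. (\<Sum>r<n*M. Bm n S \<nu> Z J $$ (r,k) * h r)^2)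
     \<le> C^2 * (\<Sum>q\<in>{..<K}\<times>{..<n}. (\<Sum>k<n*M. V2 n Z M K J \<nu> q k * h k)^2)"
proof -
  let ?P = "proj_clust Z" and ?d = "dd J \<nu>"
  define y where "y m' j = ?d j * (\<Sum>m<M. ?P $$ (m,m') * h (m*n+j))" for m' j
  have col: "(\<Sum>r<n*M. Bm n S \<nu> Z J $$ (r, m'*n+j') * h r) = (\<Sum>j<n. S $$ (j,j') * y m' j)"
    if m': "m' < M" and j': "j' < n" for m' j'
  proof -
    have "(\<Sum>r<n*M. Bm n S \<nu> Z J $$ (r, m'*n+j') * h r) = (\<Sum>m<M. \<Sum>j<n. Bm n S \<nu> Z J $$ (m*n+j, m'*n+j') * h (m*n+j))"
      by (rule sum_split)
    also have "\<dots> = (\<Sum>m<M. \<Sum>j<n. ?P $$ (m,m') * (?d j * S $$ (j,j')) * h (m*n+j))"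
      using m' j' by (intro sum.cong refl) (simp add: Bm_entry(1)[OF Z S])
    also have "\<dots> = (\<Sum>j<n. \<Sum>m<M. ?P $$ (m,m') * (?d j * S $$ (j,j')) * h (m*n+j))"
      by (rule sum.swap)
    also have "\<dots> = (\<Sum>j<n. S $$ (j,j') * y m' j)"
      unfolding y_def by (intro sum.cong refl) (simp add: sum_distrib_left mult_ac)
    finally show ?thesis .
  qed
  have "(\<Sum>k<n*M. (\<Sum>r<n*M. Bm n S \<nu> Z J $$ (r,k) * h r)^2) = (\<Sum>m'<M. \<Sum>j'<n. (\<Sum>r<n*M. Bm n S \<nu> Z J $$ (r,m'*n+j') * h r)^2)"
    by (rule sum_split)
  also have "\<dots> = (\<Sum>m'<M. \<Sum>j'<n. (\<Sum>j<n. S $$ (j,j') * y m' j)^2)"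
    by (intro sum.cong refl) (simp add: col)
  also have "\<dots> \<le> (\<Sum>m'<M. C^2 * (\<Sum>j<n. (y m' j)^2))"
    by (intro sum_mono opn_bound_T[OF S C])
  also have "\<dots> = C^2 * (\<Sum>j<n. \<Sum>m'<M. (y m' j)^2)"
    by (simp add: sum_distrib_left sum.swap[of _ "{..<M}"])
  also have "(\<Sum>j<n. \<Sum>m'<M. (y m' j)^2) = (\<Sum>j<n. \<Sum>c<K. (?d j)^2 * (Qs n Z M K h j c)^2 / real (sz Z M K c))"
  proof (rule sum.cong[OF refl])
    fix j assume "j \<in> {..<n}"
    have "(\<Sum>m'<M. (y m' j)^2) = (\<Sum>m'<M. ((?d j)^2 * (Qs n Z M K h j (cl Z K m'))^2 / real (sz Z M K (cl Z K m'))) / real (sz Z M K (cl Z K m')))"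
    proof (intro sum.cong refl)
      fix m' assume m': "m' \<in> {..<M}"
      have "y m' j = ?d j * (Qs n Z M K h j (cl Z K m') / real (sz Z M K (cl Z K m')))"
        unfolding y_def Qs_def using m' by (simp add: proj_apply[OF Z])
      then show "(y m' j)^2 = ((?d j)^2 * (Qs n Z M K h j (cl Z K m'))^2 / real (sz Z M K (cl Z K m'))) / real (sz Z M K (cl Z K m'))"
        by (simp add: power_mult_distrib power_divide power2_eq_square)
    qed
    also have "\<dots> = (\<Sum>c<K. (?d j)^2 * (Qs n Z M K h j c)^2 / real (sz Z M K c))"
      by (rule group_cl[OF Z])
    finally show "(\<Sum>m'<M. (y m' j)^2) = \<dots>" .
  qed
  also have "(\<Sum>j<n. \<Sum>c<K. (?d j)^2 * (Qs n Z M K h j c)^2 / real (sz Z M K c))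
      = (\<Sum>q\<in>{..<K}\<times>{..<n}. (\<Sum>k<n*M. V2 n Z M K J \<nu> q k * h k)^2)"
  proof -
    have "(\<Sum>q\<in>{..<K}\<times>{..<n}. (\<Sum>k<n*M. V2 n Z M K J \<nu> q k * h k)^2) = (\<Sum>c<K. \<Sum>j<n. (\<Sum>k<n*M. V2 n Z M K J \<nu> (c,j) k * h k)^2)"
      by (simp add: sum.cartesian_product)
    also have "\<dots> = (\<Sum>c<K. \<Sum>j<n. (?d j)^2 * (Qs n Z M K h j c)^2 / real (sz Z M K c))"
    proof (intro sum.cong refl)
      fix c j assume c: "c \<in> {..<K}" and j: "j \<in> {..<n}"
      have sp: "0 < sz Z M K c" using sz_pos[OF Z] c by simp
      show "(\<Sum>k<n*M. V2 n Z M K J \<nu> (c,j) k * h k)^2 = (?d j)^2 * (Qs n Z M K h j c)^2 / real (sz Z M K c)"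
        using c j sp by (simp add: V2_row[OF Z] power_mult_distrib power_divide)
    qed
    also have "\<dots> = (\<Sum>j<n. \<Sum>c<K. (?d j)^2 * (Qs n Z M K h j c)^2 / real (sz Z M K c))"
      by (rule sum.swap)
    finally show ?thesis by simp
  qed
  finally show ?thesis .
qed

lemma det_eq: assumes Z: "Z \<in> clust_mats M K"
  shows "(\<Sum>k<n*M. (\<Sum>q\<in>{..<K}\<times>{..<n}. V2 n Z M K J \<nu> q k * g q)^2)
       = (\<Sum>q\<in>{..<K}\<times>{..<n}. (dd J \<nu> (snd q))^2 * (g q)^2)"
proof -
  let ?d = "dd J \<nu>"
  have "(\<Sum>k<n*M. (\<Sum>q\<in>{..<K}\<times>{..<n}. V2 n Z M K J \<nu> q k * g q)^2)
      = (\<Sum>m<M. \<Sum>j<n. (\<Sum>q\<in>{..<K}\<times>{..<n}. V2 n Z M K J \<nu> q (m*n+j) * g q)^2)"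
    by (rule sum_split)
  also have "\<dots> = (\<Sum>m<M. \<Sum>j<n. (?d j)^2 * (g (cl Z K m, j))^2 / real (sz Z M K (cl Z K m)))"
  proof (intro sum.cong refl)
    fix m j assume m: "m \<in> {..<M}" and j: "j \<in> {..<n}"
    have clm: "cl Z K m < K" using cl_props(1)[OF Z] m by simp
    have sp: "0 < sz Z M K (cl Z K m)" using sz_pos[OF Z clm] .
    have "(\<Sum>q\<in>{..<K}\<times>{..<n}. V2 n Z M K J \<nu> q (m*n+j) * g q)
       = (\<Sum>q\<in>{..<K}\<times>{..<n}. if q = (cl Z K m, j) then ?d j / sqrt (real (sz Z M K (cl Z K m))) * g (cl Z K m, j) else 0)"
      using j by (intro sum.cong refl) (auto simp: V2_def divmod_idx)
    also have "\<dots> = ?d j / sqrt (real (sz Z M K (cl Z K m))) * g (cl Z K m, j)"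
      using clm j by (simp add: sum.delta')
    finally show "(\<Sum>q\<in>{..<K}\<times>{..<n}. V2 n Z M K J \<nu> q (m*n+j) * g q)^2 = (?d j)^2 * (g (cl Z K m, j))^2 / real (sz Z M K (cl Z K m))"
      using sp by (simp add: power_mult_distrib power_divide)
  qed
  also have "\<dots> = (\<Sum>j<n. \<Sum>m<M. (?d j)^2 * (g (cl Z K m, j))^2 / real (sz Z M K (cl Z K m)))"
    by (rule sum.swap)
  also have "\<dots> = (\<Sum>j<n. \<Sum>c<K. (?d j)^2 * (g (c, j))^2)"
    by (intro sum.cong refl group_cl[OF Z])
  also have "\<dots> = (\<Sum>c<K. \<Sum>j<n. (?d j)^2 * (g (c, j))^2)"
    by (rule sum.swap)
  also have "\<dots> = (\<Sum>q\<in>{..<K}\<times>{..<n}. (?d (snd q))^2 * (g q)^2)"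
    by (simp add: sum.cartesian_product case_prod_unfold)
  finally show ?thesis .
qed


definition Xq :: "nat \<Rightarrow> nat \<Rightarrow> real mat \<Rightarrow> (nat \<Rightarrow> real) \<Rightarrow> real mat \<Rightarrow> nat set \<Rightarrow> (nat \<Rightarrow> real) \<Rightarrow> real" where
  "Xq n M S \<nu> Z J \<eta> = (\<Sum>r<n*M. (\<Sum>k<n*M. Bm n S \<nu> Z J $$ (r,k) * \<eta> k)^2)"

lemma quad_eq: assumes Z: "Z \<in> clust_mats M K" and S: "S \<in> carrier_mat n n" and M: "0 < M"
  shows "quad n M S \<nu> Z J \<eta> = Xq n M S \<nu> Z J \<eta>"
proof -
  have P: "proj_clust Z \<in> carrier_mat M M" by (rule proj_entry(2)[OF Z M M])
  have A: "W_mat n J * mat_diag n \<nu> * S \<in> carrier_mat n n"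
    unfolding W_mat_def by (intro mult_carrier_mat[OF _ S] mult_carrier_mat[OF mat_diag_dim mat_diag_dim])
  have B: "Bm n S \<nu> Z J \<in> carrier_mat (n*M) (n*M)" using P A S unfolding Bm_def kron_def
    by (auto simp: mult.commute W_mat_def mat_diag_def)
  show ?thesis unfolding quad_def Xq_def Bm_def[symmetric] by (rule sqnorm_Sv[OF B])
qed

lemma Xq_meas: "Xq n M S \<nu> Z J \<in> borel_measurable (GP {..<n*M})"
  unfolding Xq_def by measurable

lemma mgf_quad: assumes Z: "Z \<in> clust_mats M K" and S: "S \<in> carrier_mat n n" and C: "op_norm S \<le> C"
  and lam: "0 \<le> lam" and small: "\<And>j. j < n \<Longrightarrow> 2*(lam*C^2)*(dd J \<nu> j)^2 \<le> 2/3"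
  shows "(\<integral>\<^sup>+\<eta>. ennreal (exp (lam * Xq n M S \<nu> Z J \<eta>)) \<partial>GP {..<n*M})
    \<le> ennreal (exp (2*(lam*C^2)*(real K * (\<Sum>j<n. (dd J \<nu> j)^2))))"
proof -
  let ?B = "Bm n S \<nu> Z J" and ?Q = "{..<K}\<times>{..<n}" and ?V = "V2 n Z M K J \<nu>"
  have "(\<integral>\<^sup>+\<eta>. ennreal (exp (lam * Xq n M S \<nu> Z J \<eta>)) \<partial>GP {..<n*M})
     = (\<integral>\<^sup>+h. ennreal (exp (lam * (\<Sum>k\<in>{..<n*M}. (\<Sum>r\<in>{..<n*M}. ?B $$ (r,k) * h r)^2))) \<partial>GP {..<n*M})"
    unfolding Xq_def by (rule HS) (use lam in auto)
  also have "\<dots> \<le> (\<integral>\<^sup>+h. ennreal (exp ((lam*C^2) * (\<Sum>q\<in>?Q. (\<Sum>k\<in>{..<n*M}. ?V q k * h k)^2))) \<partial>GP {..<n*M})"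
  proof (intro nn_integral_mono ennreal_leI)
    fix h :: "nat \<Rightarrow> real"
    have "lam * (\<Sum>k<n*M. (\<Sum>r<n*M. ?B $$ (r,k) * h r)^2) \<le> lam * (C^2 * (\<Sum>q\<in>?Q. (\<Sum>k<n*M. ?V q k * h k)^2))"
      by (intro mult_left_mono det_ineq[OF Z S C] lam)
    then show "exp (lam * (\<Sum>k\<in>{..<n*M}. (\<Sum>r\<in>{..<n*M}. ?B $$ (r,k) * h r)^2)) \<le> exp ((lam*C^2) * (\<Sum>q\<in>?Q. (\<Sum>k\<in>{..<n*M}. ?V q k * h k)^2))"
      by (simp add: mult.assoc)
  qed
  also have "\<dots> = (\<integral>\<^sup>+g. ennreal (exp ((lam*C^2) * (\<Sum>k\<in>{..<n*M}. (\<Sum>q\<in>?Q. ?V q k * g q)^2))) \<partial>GP ?Q)"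
    by (rule HS) (use lam in auto)
  also have "\<dots> = (\<integral>\<^sup>+g. ennreal (exp ((lam*C^2) * (\<Sum>q\<in>?Q. (dd J \<nu> (snd q))^2 * (g q)^2))) \<partial>GP ?Q)"
    by (simp add: det_eq[OF Z])
  also have "\<dots> \<le> ennreal (exp (2*(lam*C^2)*(\<Sum>q\<in>?Q. (dd J \<nu> (snd q))^2)))"
    by (rule chi_vec) (use lam small in auto)
  also have "(\<Sum>q\<in>?Q. (dd J \<nu> (snd q))^2) = real K * (\<Sum>j<n. (dd J \<nu> j)^2)"
  proof -
    have "(\<Sum>q\<in>?Q. (dd J \<nu> (snd q))^2) = (\<Sum>(c,j)\<in>?Q. (dd J \<nu> j)^2)"
      by (simp add: split_beta)
    also have "\<dots> = (\<Sum>c<K. \<Sum>j<n. (dd J \<nu> j)^2)"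
      by (rule sum.cartesian_product[symmetric])
    also have "\<dots> = real K * (\<Sum>j<n. (dd J \<nu> j)^2)" by simp
    finally show ?thesis .
  qed
  finally show ?thesis .
qed


lemma tail: assumes Z: "Z \<in> clust_mats M K" and S: "S \<in> carrier_mat n n" and C: "op_norm S \<le> C"
  and sv: "0 < sv" and hs: "\<And>j. j < n \<Longrightarrow> C^2 * (dd J \<nu> j)^2 \<le> sv"
  shows "emeasure (GP {..<n*M}) {\<eta> \<in> space (GP {..<n*M}). 2*real K*C^2*(\<Sum>j<n. (dd J \<nu> j)^2) + 3 * sv * x < Xq n M S \<nu> Z J \<eta>}
     \<le> ennreal (exp (-x))"
proof -
  let ?G = "GP {..<n*M}" and ?X = "Xq n M S \<nu> Z J" and ?T = "real K*C^2*(\<Sum>j<n. (dd J \<nu> j)^2)"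
  define a where "a = 2*?T + 3 * sv * x"
  define lam where "lam = 1/(3 * sv)"
  have lam: "0 < lam" using sv by (simp add: lam_def)
  let ?A = "{\<eta> \<in> space ?G. a < ?X \<eta>}"
  have Xm[measurable]: "?X \<in> borel_measurable ?G" by (rule Xq_meas)
  have Am: "?A \<in> sets ?G" by measurable
  have small: "2*(lam*C^2)*(dd J \<nu> j)^2 \<le> 2/3" if "j < n" for j
  proof -
    have "2*(lam*C^2)*(dd J \<nu> j)^2 = (2/3) * ((C^2*(dd J \<nu> j)^2)/sv)" using sv by (simp add: lam_def field_simps)
    also have "\<dots> \<le> (2/3) * 1" using hs[OF that] sv by (intro mult_left_mono) (auto simp: divide_le_eq)
    finally show ?thesis by simp
  qed
  have "emeasure ?G ?A = (\<integral>\<^sup>+\<eta>. indicator ?A \<eta> \<partial>?G)" using Am by simp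
  also have "\<dots> \<le> (\<integral>\<^sup>+\<eta>. ennreal (exp (-(lam*a))) * ennreal (exp (lam * ?X \<eta>)) \<partial>?G)"
  proof (intro nn_integral_mono)
    fix \<eta> assume "\<eta> \<in> space ?G"
    show "indicator ?A \<eta> \<le> ennreal (exp (-(lam*a))) * ennreal (exp (lam * ?X \<eta>))"
    proof (cases "\<eta> \<in> ?A")
      case True
      then have "lam * a \<le> lam * ?X \<eta>" using lam by (intro mult_left_mono) auto
      then have "1 \<le> exp (-(lam*a)) * exp (lam * ?X \<eta>)" by (simp add: exp_add[symmetric])
      then show ?thesis using True by (simp add: ennreal_mult[symmetric] ennreal_1[symmetric] del: ennreal_1)
    qed simp
  qed
  also have "\<dots> = ennreal (exp (-(lam*a))) * (\<integral>\<^sup>+\<eta>. ennreal (exp (lam * ?X \<eta>)) \<partial>?G)"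
    by (rule nn_integral_cmult) measurable
  also have "\<dots> \<le> ennreal (exp (-(lam*a))) * ennreal (exp (2*(lam*C^2)*(real K * (\<Sum>j<n. (dd J \<nu> j)^2))))"
    by (intro mult_left_mono mgf_quad[OF Z S C] small) (use lam in auto)
  also have "\<dots> = ennreal (exp (-x))"
  proof -
    have "-(lam*a) + 2*(lam*C^2)*(real K * (\<Sum>j<n. (dd J \<nu> j)^2)) = -x"
      using sv unfolding a_def lam_def by (simp add: field_simps)
    then show ?thesis by (simp add: ennreal_mult[symmetric] exp_add[symmetric])
  qed
  finally show ?thesis unfolding a_def by (simp add: mult.assoc)
qed

lemma S_zero: assumes S: "S \<in> carrier_mat n n" and C: "op_norm S \<le> 0" and i: "i < n" "j < n"
  shows "S $$ (i,j) = 0"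
proof -
  have "(\<Sum>i<n. (\<Sum>k<n. S $$ (i,k) * (if k = j then 1 else 0))^2) \<le> 0^2 * (\<Sum>k<n. (if k = j then (1::real) else 0)^2)"
    by (rule opn_bound(1)[OF S C])
  then have "(\<Sum>i<n. (S $$ (i,j))^2) \<le> 0" using i by (simp add: if_distrib cong: if_cong)
  moreover have "0 \<le> (\<Sum>i<n. (S $$ (i,j))^2)" by (intro sum_nonneg) auto
  ultimately have "(\<Sum>i<n. (S $$ (i,j))^2) = 0" by (rule antisym)
  then have "\<forall>i\<in>{..<n}. (S $$ (i,j))^2 = 0" by (subst (asm) sum_nonneg_eq_0_iff) auto
  then show ?thesis using i by simp
qed

lemma Xq_zero: assumes Z: "Z \<in> clust_mats M K" and S: "S \<in> carrier_mat n n" and C: "op_norm S \<le> 0"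
  shows "Xq n M S \<nu> Z J \<eta> = 0"
proof -
  have "Bm n S \<nu> Z J $$ (r,k) = 0" if r: "r < n*M" and k: "k < n*M" for r k
  proof -
    have n: "0 < n" using r by (cases n) auto
    have "r div n < M" "k div n < M" using r k n by (auto simp: div_less_iff_less_mult mult.commute)
    moreover have "r mod n < n" "k mod n < n" using n by auto
    ultimately have "Bm n S \<nu> Z J $$ ((r div n)*n + r mod n, (k div n)*n + k mod n)
        = proj_clust Z $$ (r div n, k div n) * (dd J \<nu> (r mod n) * S $$ (r mod n, k mod n))"
      by (rule Bm_entry(1)[OF Z S])
    moreover have "S $$ (r mod n, k mod n) = 0" using n by (intro S_zero[OF S C]) auto
    ultimately show ?thesis by simp
  qed
  then show ?thesis unfolding Xq_def by simp
qed


definition Ev :: "nat \<Rightarrow> nat \<Rightarrow> real mat \<Rightarrow> (nat \<Rightarrow> real) \<Rightarrow> real \<Rightarrow> nat \<Rightarrow> real mat \<Rightarrow> nat set \<Rightarrow> real \<Rightarrow> (nat \<Rightarrow> real) set" where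
  "Ev n M S \<nu> C K Z J x = {\<eta> \<in> space (GP {..<n*M}).
      2 * real K * C^2 * (\<Sum>j\<in>J. (\<nu> j)^2) + 3 * C^2 * (MAX j\<in>J. (\<nu> j)^2) * x < quad n M S \<nu> Z J \<eta>}"

lemma sum_dd: assumes "J \<subseteq> {..<n}" shows "(\<Sum>j<n. (dd J \<nu> j)^2) = (\<Sum>j\<in>J. (\<nu> j)^2)"
proof -
  have "(\<Sum>j<n. (dd J \<nu> j)^2) = (\<Sum>j\<in>{..<n}. if j \<in> J then (\<nu> j)^2 else 0)"
    by (intro sum.cong) (auto simp: dd_def)
  also have "\<dots> = (\<Sum>j\<in>J. if j \<in> J then (\<nu> j)^2 else 0)"
    using assms by (intro sum.mono_neutral_right) auto
  also have "\<dots> = (\<Sum>j\<in>J. (\<nu> j)^2)" by simp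
  finally show ?thesis .
qed

lemma event: assumes Z: "Z \<in> clust_mats M K" and S: "S \<in> carrier_mat n n" and C: "op_norm S \<le> C"
  and J: "J \<subseteq> {..<n}" "J \<noteq> {}" and pos: "\<forall>j<n. 0 < \<nu> j" and M: "0 < M"
  shows "Ev n M S \<nu> C K Z J x \<in> sets (GP {..<n*M})"
    and "measure (GP {..<n*M}) (Ev n M S \<nu> C K Z J x) \<le> exp (-x)"
proof -
  let ?G = "GP {..<n*M}"
  interpret prob_space ?G by (rule prob_GP)
  have fJ: "finite J" using J(1) finite_subset by blast
  have E: "Ev n M S \<nu> C K Z J x = {\<eta> \<in> space ?G.
      2 * real K * C^2 * (\<Sum>j<n. (dd J \<nu> j)^2) + 3 * (C^2 * (MAX j\<in>J. (\<nu> j)^2)) * x < Xq n M S \<nu> Z J \<eta>}"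
    unfolding Ev_def sum_dd[OF J(1)] quad_eq[OF Z S M] by (simp add: mult.assoc)
  have Xm[measurable]: "Xq n M S \<nu> Z J \<in> borel_measurable ?G" by (rule Xq_meas)
  show "Ev n M S \<nu> C K Z J x \<in> sets ?G" unfolding E by measurable
  have C0: "0 \<le> C" using opn_bound(2)[OF S C] .
  show "measure ?G (Ev n M S \<nu> C K Z J x) \<le> exp (-x)"
  proof (cases "C = 0")
    case True
    have "Ev n M S \<nu> C K Z J x = {}"
      unfolding E using Xq_zero[OF Z S] C True by auto
    then show ?thesis by simp
  next
    case False
    then have Cp: "0 < C^2" by simp
    obtain j0 where j0: "j0 \<in> J" using J(2) by auto
    have mx: "(\<nu> j)^2 \<le> (MAX j\<in>J. (\<nu> j)^2)" if "j \<in> J" for j using fJ that by (intro Max_ge) auto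
    have "0 < (\<nu> j0)^2" using pos j0 J(1) by auto
    then have mp: "0 < (MAX j\<in>J. (\<nu> j)^2)" using mx[OF j0] by linarith
    have hs: "C^2 * (dd J \<nu> j)^2 \<le> C^2 * (MAX j\<in>J. (\<nu> j)^2)" if "j < n" for j
      using mx mp Cp by (intro mult_left_mono) (auto simp: dd_def)
    have "emeasure ?G (Ev n M S \<nu> C K Z J x) \<le> ennreal (exp (-x))"
      unfolding E by (rule tail[OF Z S C _ hs]) (use Cp mp in auto)
    then show ?thesis by (simp add: emeasure_eq_measure)
  qed
qed


lemma clust_card: "finite (clust_mats M K)" "card (clust_mats M K) \<le> K^M"
proof -
  define f where "f Z = restrict (cl Z K) {..<M}" for Z
  have inj: "inj_on f (clust_mats M K)"
  proof (rule inj_onI)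
    fix Z Z' assume Z: "Z \<in> clust_mats M K" and Z': "Z' \<in> clust_mats M K" and e: "f Z = f Z'"
    have cl: "cl Z K i = cl Z' K i" if "i < M" for i
      using fun_cong[OF e, of i] that by (simp add: f_def)
    show "Z = Z'"
    proof (rule eq_matI)
      show "dim_row Z = dim_row Z'" "dim_col Z = dim_col Z'" using Z_carrier[OF Z] Z_carrier[OF Z'] by auto
      fix i k assume "i < dim_row Z'" "k < dim_col Z'"
      then have ik: "i < M" "k < K" using Z_carrier[OF Z'] by auto
      show "Z $$ (i,k) = Z' $$ (i,k)" using cl_props(3)[OF Z ik] cl_props(3)[OF Z' ik] cl[OF ik(1)] by simp
    qed
  qed
  have sub: "f ` clust_mats M K \<subseteq> {..<M} \<rightarrow>\<^sub>E {..<K}"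
  proof
    fix g assume "g \<in> f ` clust_mats M K"
    then obtain Z where Z: "Z \<in> clust_mats M K" and g: "g = f Z" by auto
    show "g \<in> {..<M} \<rightarrow>\<^sub>E {..<K}" unfolding g f_def restrict_PiE_iff using cl_props(1)[OF Z] by auto
  qed
  have fin: "finite ({..<M} \<rightarrow>\<^sub>E {..<K})" by (intro finite_PiE) auto
  show "finite (clust_mats M K)" by (rule inj_on_finite[OF inj sub fin])
  have "card (clust_mats M K) \<le> card ({..<M} \<rightarrow>\<^sub>E {..<K})" by (rule card_inj_on_le[OF inj sub fin])
  also have "\<dots> = K^M" by (simp add: card_PiE)
  finally show "card (clust_mats M K) \<le> K^M" .
qed

lemma pow_fact_le_exp: "(real L)^L / fact L \<le> exp (real L)"
proof -
  obtain t where t: "exp (real L) = (\<Sum>m<Suc L. (real L ^ m) / fact m) + (exp t / fact (Suc L)) * real L ^ Suc L"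
    using Maclaurin_exp_le[of "real L" "Suc L"] by blast
  have "(real L)^L / fact L \<le> (\<Sum>m<Suc L. (real L ^ m) / fact m)"
    by (rule member_le_sum[of L "{..<Suc L}" "\<lambda>m. real L ^ m / fact m"]) auto
  also have "\<dots> \<le> exp (real L)" unfolding t by simp
  finally show ?thesis .
qed

lemma choose_fact: assumes "L \<le> n" shows "real (n choose L) * fact L \<le> real n ^ L"
proof -
  have e: "fact L * fact (n - L) * (n choose L) = (fact n :: nat)" by (rule binomial_fact_lemma[OF assms])
  have "(n choose L) * fact L = fact n div fact (n - L)"
  proof -
    have e2: "(fact n :: nat) = ((n choose L) * fact L) * fact (n - L)" using e by (simp add: mult_ac)
    show ?thesis unfolding e2 by simp
  qed
  also have "\<dots> \<le> n ^ L" by (rule fact_div_fact_le_pow[OF assms])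
  finally have "(n choose L) * fact L \<le> n ^ L" .
  then have "real ((n choose L) * fact L) \<le> real (n ^ L)" by (rule of_nat_mono)
  then show ?thesis by simp
qed

lemma term_bound: assumes L: "1 \<le> L" "L \<le> n"
  shows "real (n choose L) * (real L / (real n * exp 1))^L \<le> 1"
proof -
  have np: "0 < real n" using L by simp
  have "real (n choose L) * (real L / (real n * exp 1))^L = (real (n choose L) * fact L) * ((real L)^L / fact L) / (real n ^ L * exp (real L))"
    by (simp add: power_divide power_mult_distrib exp_of_nat_mult[symmetric] mult.commute)
  also have "\<dots> \<le> (real n ^ L) * exp (real L) / (real n ^ L * exp (real L))"
    by (intro divide_right_mono mult_mono choose_fact pow_fact_le_exp L) (use np in auto)
  also have "\<dots> = 1" using np by simp
  finally show ?thesis .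
qed

lemma sumJ: "(\<Sum>J\<in>{J. J \<subseteq> {..<n} \<and> J \<noteq> {}}. (real (card J) / (real n * exp 1))^(card J)) \<le> real n"
proof -
  let ?JS = "{J. J \<subseteq> {..<n} \<and> J \<noteq> {}}" and ?w = "\<lambda>L::nat. (real L / (real n * exp 1))^L"
  have finJS: "finite ?JS" by (rule finite_subset[of _ "Pow {..<n}"]) auto
  have img: "card ` ?JS \<subseteq> {1..n}"
  proof
    fix L assume "L \<in> card ` ?JS"
    then obtain J where J: "J \<subseteq> {..<n}" "J \<noteq> {}" "L = card J" by auto
    have "finite J" using J(1) finite_subset by blast
    then have "1 \<le> L" using J by (simp add: Suc_le_eq card_gt_0_iff)
    moreover have "L \<le> n" using card_mono[OF _ J(1)] J(3) by simp
    ultimately show "L \<in> {1..n}" by simp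
  qed
  have "(\<Sum>J\<in>?JS. ?w (card J)) = (\<Sum>L\<in>{1..n}. \<Sum>J\<in>{J. J \<in> ?JS \<and> card J = L}. ?w (card J))"
    by (rule sum.group[symmetric, OF finJS _ img]) simp
  also have "\<dots> = (\<Sum>L\<in>{1..n}. real (n choose L) * ?w L)"
  proof (intro sum.cong refl)
    fix L assume L: "L \<in> {1..n}"
    have "{J. J \<in> ?JS \<and> card J = L} = {J. J \<subseteq> {..<n} \<and> card J = L}"
      using L by auto
    then have "card {J. J \<in> ?JS \<and> card J = L} = n choose L" using n_subsets[of "{..<n}" L] by simp
    moreover have "(\<Sum>J\<in>{J. J \<in> ?JS \<and> card J = L}. ?w (card J)) = (\<Sum>J\<in>{J. J \<in> ?JS \<and> card J = L}. ?w L)"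
      by (intro sum.cong) auto
    ultimately show "(\<Sum>J\<in>{J. J \<in> ?JS \<and> card J = L}. ?w (card J)) = real (n choose L) * ?w L" by simp
  qed
  also have "\<dots> \<le> (\<Sum>L\<in>{1..n}. 1)"
    by (intro sum_mono term_bound) auto
  also have "\<dots> = real n" by simp
  finally show ?thesis .
qed


lemma good: assumes Z: "Z \<in> clust_mats M K" and S: "S \<in> carrier_mat n n" and C: "op_norm S \<le> C"
  and J: "J \<subseteq> {..<n}" "J \<noteq> {}" and pos: "\<forall>j<n. 0 < \<nu> j" and M: "0 < M"
  shows "space (GP {..<n*M}) - Ev n M S \<nu> C K Z J x \<in> sets (GP {..<n*M})"
    "1 - exp (-x) \<le> measure (GP {..<n*M}) (space (GP {..<n*M}) - Ev n M S \<nu> C K Z J x)"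
    "\<And>\<eta>. \<eta> \<in> space (GP {..<n*M}) - Ev n M S \<nu> C K Z J x \<Longrightarrow>
       quad n M S \<nu> Z J \<eta> \<le> 2 * real K * C^2 * (\<Sum>j\<in>J. (\<nu> j)^2) + 3 * C^2 * (MAX j\<in>J. (\<nu> j)^2) * x"
proof -
  interpret prob_space "GP {..<n*M}" by (rule prob_GP)
  note E = event[OF Z S C J pos M, of x]
  show "space (GP {..<n*M}) - Ev n M S \<nu> C K Z J x \<in> sets (GP {..<n*M})" using E(1) by auto
  show "1 - exp (-x) \<le> measure (GP {..<n*M}) (space (GP {..<n*M}) - Ev n M S \<nu> C K Z J x)"
    using E by (simp add: prob_compl)
  fix \<eta> assume "\<eta> \<in> space (GP {..<n*M}) - Ev n M S \<nu> C K Z J x"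
  then show "quad n M S \<nu> Z J \<eta> \<le> 2 * real K * C^2 * (\<Sum>j\<in>J. (\<nu> j)^2) + 3 * C^2 * (MAX j\<in>J. (\<nu> j)^2) * x"
    unfolding Ev_def by auto
qed

lemma exp_weight: assumes K: "1 \<le> K" and J: "1 \<le> cJ" and n: "1 \<le> n" and M: "1 \<le> M"
  shows "exp (-(real M * ln (real K) + real cJ * ln (real n * exp 1 / real cJ) + ln (real M * real n) + t))
    = exp (-t) / (real K ^ M * (real M * real n)) * (real cJ / (real n * exp 1)) ^ cJ"
proof -
  have a: "exp (real M * ln (real K)) = real K ^ M" using K by (simp add: exp_of_nat_mult)
  have b: "exp (real cJ * ln (real n * exp 1 / real cJ)) = (real n * exp 1 / real cJ) ^ cJ"
    using J n by (simp add: exp_of_nat_mult)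
  have c: "exp (ln (real M * real n)) = real M * real n" using M n by simp
  have "exp (-(real M * ln (real K) + real cJ * ln (real n * exp 1 / real cJ) + ln (real M * real n) + t))
     = exp (-t) / (exp (real M * ln (real K)) * exp (real cJ * ln (real n * exp 1 / real cJ)) * exp (ln (real M * real n)))"
    by (simp add: exp_add[symmetric] exp_minus field_simps exp_diff)
  also have "\<dots> = exp (-t) / (real K ^ M * (real n * exp 1 / real cJ) ^ cJ * (real M * real n))"
    unfolding a b c ..
  also have "\<dots> = exp (-t) / (real K ^ M * (real M * real n)) * (real cJ / (real n * exp 1)) ^ cJ"
    using J n K M by (simp add: power_divide field_simps)
  finally show ?thesis .
qed

lemma exp_weight2: assumes K: "1 \<le> K" and n: "1 \<le> n" and M: "1 \<le> M"
  shows "exp (-(real M * ln (real K) + ln (real M * real n) + t)) = exp (-t) / (real K ^ M * (real M * real n))"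
proof -
  have a: "exp (real M * ln (real K)) = real K ^ M" using K by (simp add: exp_of_nat_mult)
  have c: "exp (ln (real M * real n)) = real M * real n" using M n by simp
  have "exp (-(real M * ln (real K) + ln (real M * real n) + t))
     = exp (-t) / (exp (real M * ln (real K)) * exp (ln (real M * real n)))"
    by (simp add: exp_add[symmetric] exp_minus field_simps exp_diff)
  also have "\<dots> = exp (-t) / (real K ^ M * (real M * real n))" unfolding a c ..
  finally show ?thesis .
qed

lemma union_bound: assumes fin: "finite I" and sets: "\<And>i. i \<in> I \<Longrightarrow> A i \<in> sets N"
  and b: "\<And>i. i \<in> I \<Longrightarrow> measure N (A i) \<le> f i"
  shows "measure N (\<Union>i\<in>I. A i) \<le> (\<Sum>i\<in>I. f i)" "(\<Union>i\<in>I. A i) \<in> sets N"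
proof -
  show "measure N (\<Union>i\<in>I. A i) \<le> (\<Sum>i\<in>I. f i)"
    using measure_UNION_le[OF fin sets] sum_mono[of I "\<lambda>i. measure N (A i)" f] b by fastforce
  show "(\<Union>i\<in>I. A i) \<in> sets N" using fin sets by (intro sets.finite_UN) auto
qed

theorem lemma1:
  fixes \<delta> \<tau> C\<psi> :: real and n M :: nat and S :: "real mat" and \<nu> :: "nat \<Rightarrow> real"
  assumes "0 < \<delta>" "\<delta> < 1" "0 < \<tau>" "1 \<le> n" "1 \<le> M"
    and "S \<in> carrier_mat n n" "op_norm S \<le> C\<psi>"
    and "\<forall>j<n. 0 < \<nu> j"
  shows
   "(\<forall>K\<in>{1..M}. \<forall>Z\<in>clust_mats M K. \<forall>J. J \<subseteq> {..<n} \<and> J \<noteq> {} \<longrightarrow>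
      (\<exists>\<Omega>\<in>sets (gauss_space (n*M)). measure (gauss_space (n*M)) \<Omega> \<ge> 1 - \<delta> powr \<tau> \<and>
        (\<forall>\<eta>\<in>\<Omega>. quad n M S \<nu> Z J \<eta> \<le>
           2 * K * C\<psi>^2 * (\<Sum>j\<in>J. (\<nu> j)^2)
           + 3 * C\<psi>^2 * (MAX j\<in>J. (\<nu> j)^2) * \<tau> * ln (1/\<delta>))))
  \<and> (\<exists>\<Omega>\<in>sets (gauss_space (n*M)). measure (gauss_space (n*M)) \<Omega> \<ge> 1 - \<delta> powr \<tau> \<and>
       (\<forall>\<eta>\<in>\<Omega>. \<forall>K\<in>{1..M}. \<forall>Z\<in>clust_mats M K. \<forall>J. J \<subseteq> {..<n} \<and> J \<noteq> {} \<longrightarrow>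
          quad n M S \<nu> Z J \<eta> \<le>
           2 * K * C\<psi>^2 * (\<Sum>j\<in>J. (\<nu> j)^2)
           + 3 * C\<psi>^2 * (MAX j\<in>J. (\<nu> j)^2) *
             (M * ln K + card J * ln (n * exp 1 / card J) + ln (M * n) + \<tau> * ln (1/\<delta>))))
  \<and> ((\<forall>i j. i \<le> j \<and> j < n \<longrightarrow> \<nu> i \<le> \<nu> j) \<longrightarrow>
       (\<forall>K\<in>{1..M}. \<forall>Z\<in>clust_mats M K. \<forall>L\<in>{1..n}.
          (\<exists>\<Omega>\<in>sets (gauss_space (n*M)). measure (gauss_space (n*M)) \<Omega> \<ge> 1 - \<delta> powr \<tau> \<and>
            (\<forall>\<eta>\<in>\<Omega>. quad n M S \<nu> Z {..<L} \<eta> \<le>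
               2 * K * C\<psi>^2 * (\<Sum>j<L. (\<nu> j)^2)
               + 3 * C\<psi>^2 * \<tau> * ln (1/\<delta>) * (\<nu> (L - 1))^2)))
     \<and> (\<exists>\<Omega>\<in>sets (gauss_space (n*M)). measure (gauss_space (n*M)) \<Omega> \<ge> 1 - \<delta> powr \<tau> \<and>
          (\<forall>\<eta>\<in>\<Omega>. \<forall>K\<in>{1..M}. \<forall>Z\<in>clust_mats M K. \<forall>L\<in>{1..n}.
             quad n M S \<nu> Z {..<L} \<eta> \<le>
               2 * K * C\<psi>^2 * (\<Sum>j<L. (\<nu> j)^2)
               + 3 * C\<psi>^2 * (\<nu> (L - 1))^2 *
                 (M * ln K + ln (M * n) + \<tau> * ln (1/\<delta>)))))"
proof -
  let ?G = "gauss_space (n*M)"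
  have G: "?G = GP {..<n*M}" by (simp add: gauss_space_def)
  interpret prob_space ?G unfolding G by (rule prob_GP)
  have M0: "0 < M" using assms(5) by simp
  note Sc = assms(6) and Cc = assms(7)
  have pos: "\<forall>j<n. 0 < \<nu> j" using assms(8) .
  define t where "t = \<tau> * ln (1/\<delta>)"
  have dt: "\<delta> powr \<tau> = exp (-t)"
    using assms(1) by (simp add: t_def powr_def ln_div mult.commute)
  have part1: "\<exists>\<Omega>\<in>sets ?G. measure ?G \<Omega> \<ge> 1 - \<delta> powr \<tau> \<and>
        (\<forall>\<eta>\<in>\<Omega>. quad n M S \<nu> Z J \<eta> \<le> 2 * real K * C\<psi>^2 * (\<Sum>j\<in>J. (\<nu> j)^2) + 3 * C\<psi>^2 * (MAX j\<in>J. (\<nu> j)^2) * t)"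
    if Z: "Z \<in> clust_mats M K" and J: "J \<subseteq> {..<n}" "J \<noteq> {}" for K Z J
    using good[OF Z Sc Cc J pos M0, where x = t] unfolding G dt by blast
  show ?thesis
  proof (intro conjI impI)
    show "\<forall>K\<in>{1..M}. \<forall>Z\<in>clust_mats M K. \<forall>J. J \<subseteq> {..<n} \<and> J \<noteq> {} \<longrightarrow>
      (\<exists>\<Omega>\<in>sets ?G. measure ?G \<Omega> \<ge> 1 - \<delta> powr \<tau> \<and>
        (\<forall>\<eta>\<in>\<Omega>. quad n M S \<nu> Z J \<eta> \<le>
           2 * K * C\<psi>^2 * (\<Sum>j\<in>J. (\<nu> j)^2)
           + 3 * C\<psi>^2 * (MAX j\<in>J. (\<nu> j)^2) * \<tau> * ln (1/\<delta>)))"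
      using part1 unfolding t_def by (simp add: mult.assoc)
    show "\<exists>\<Omega>\<in>sets ?G. measure ?G \<Omega> \<ge> 1 - \<delta> powr \<tau> \<and>
       (\<forall>\<eta>\<in>\<Omega>. \<forall>K\<in>{1..M}. \<forall>Z\<in>clust_mats M K. \<forall>J. J \<subseteq> {..<n} \<and> J \<noteq> {} \<longrightarrow>
          quad n M S \<nu> Z J \<eta> \<le>
           2 * K * C\<psi>^2 * (\<Sum>j\<in>J. (\<nu> j)^2)
           + 3 * C\<psi>^2 * (MAX j\<in>J. (\<nu> j)^2) *
             (M * ln K + card J * ln (n * exp 1 / card J) + ln (M * n) + \<tau> * ln (1/\<delta>)))"
    proof -
      define xx where "xx K J = real M * ln (real K) + real (card J) * ln (real n * exp 1 / real (card J)) + ln (real M * real n) + t" for K :: nat and J :: "nat set"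
      define JS where "JS = {J. J \<subseteq> {..<n} \<and> J \<noteq> {}}"
      define E where "E K Z J = Ev n M S \<nu> C\<psi> K Z J (xx K J)" for K Z J
      have finJS: "finite JS" unfolding JS_def by (rule finite_subset[of _ "Pow {..<n}"]) auto
      have cJ: "1 \<le> card J" if "J \<in> JS" for J
      proof -
        have "finite J" using that unfolding JS_def using finite_subset by blast
        then show ?thesis using that unfolding JS_def by (simp add: Suc_le_eq card_gt_0_iff)
      qed
      have n1: "1 \<le> n" using assms(4) .
      have lvl3: "measure ?G (\<Union>J\<in>JS. E K Z J) \<le> exp (-t) / (real K ^ M * (real M * real n)) * real n"
          "(\<Union>J\<in>JS. E K Z J) \<in> sets ?G"
        if K: "K \<in> {1..M}" and Z: "Z \<in> clust_mats M K" for K Z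
      proof -
        have ev: "E K Z J \<in> sets ?G" "measure ?G (E K Z J) \<le> exp (- xx K J)" if "J \<in> JS" for J
          using event[OF Z Sc Cc _ _ pos M0, of J "xx K J"] that unfolding JS_def E_def G by auto
        have "measure ?G (\<Union>J\<in>JS. E K Z J) \<le> (\<Sum>J\<in>JS. exp (- xx K J))"
          by (rule union_bound(1)[OF finJS ev(1) ev(2)])
        also have "\<dots> = (\<Sum>J\<in>JS. exp (-t) / (real K ^ M * (real M * real n)) * (real (card J) / (real n * exp 1)) ^ card J)"
          unfolding xx_def using K n1 assms(5) cJ by (intro sum.cong refl exp_weight) auto
        also have "\<dots> = exp (-t) / (real K ^ M * (real M * real n)) * (\<Sum>J\<in>JS. (real (card J) / (real n * exp 1)) ^ card J)"
          by (simp add: sum_distrib_left)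
        also have "\<dots> \<le> exp (-t) / (real K ^ M * (real M * real n)) * real n"
          by (intro mult_left_mono) (use sumJ[of n] in \<open>auto simp: JS_def\<close>)
        finally show "measure ?G (\<Union>J\<in>JS. E K Z J) \<le> exp (-t) / (real K ^ M * (real M * real n)) * real n" .
        show "(\<Union>J\<in>JS. E K Z J) \<in> sets ?G" by (rule union_bound(2)[OF finJS ev(1) ev(2)])
      qed
      have lvl2: "measure ?G (\<Union>Z\<in>clust_mats M K. \<Union>J\<in>JS. E K Z J) \<le> exp (-t) / real M"
          "(\<Union>Z\<in>clust_mats M K. \<Union>J\<in>JS. E K Z J) \<in> sets ?G"
        if K: "K \<in> {1..M}" for K
      proof -
        have "measure ?G (\<Union>Z\<in>clust_mats M K. \<Union>J\<in>JS. E K Z J) \<le> (\<Sum>Z\<in>clust_mats M K. exp (-t) / (real K ^ M * (real M * real n)) * real n)"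
          by (rule union_bound(1)[OF clust_card(1) lvl3(2)[OF K] lvl3(1)[OF K]])
        also have "\<dots> = real (card (clust_mats M K)) * (exp (-t) / (real K ^ M * (real M * real n)) * real n)"
          by simp
        also have "\<dots> \<le> real K ^ M * (exp (-t) / (real K ^ M * (real M * real n)) * real n)"
          using clust_card(2)[of M K] by (intro mult_right_mono) (auto simp flip: of_nat_power)
        also have "\<dots> = exp (-t) / real M" using K n1 by (simp add: field_simps)
        finally show "measure ?G (\<Union>Z\<in>clust_mats M K. \<Union>J\<in>JS. E K Z J) \<le> exp (-t) / real M" .
        show "(\<Union>Z\<in>clust_mats M K. \<Union>J\<in>JS. E K Z J) \<in> sets ?G"
          by (rule union_bound(2)[OF clust_card(1) lvl3(2)[OF K] lvl3(1)[OF K]])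
      qed
      define Bad where "Bad = (\<Union>K\<in>{1..M}. \<Union>Z\<in>clust_mats M K. \<Union>J\<in>JS. E K Z J)"
      have "measure ?G Bad \<le> (\<Sum>K\<in>{1..M}. exp (-t) / real M)"
        unfolding Bad_def by (rule union_bound(1)[OF _ lvl2(2) lvl2(1)]) auto
      also have "\<dots> = exp (-t)" using M0 by simp
      finally have mB: "measure ?G Bad \<le> exp (-t)" .
      have sB: "Bad \<in> sets ?G" unfolding Bad_def by (rule union_bound(2)[OF _ lvl2(2) lvl2(1)]) auto
      show ?thesis
      proof (intro bexI[of _ "space ?G - Bad"] conjI ballI impI allI)
        show "space ?G - Bad \<in> sets ?G" using sB by auto
        show "1 - \<delta> powr \<tau> \<le> measure ?G (space ?G - Bad)" using sB mB by (simp add: prob_compl dt)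
        fix \<eta> K Z J assume \<eta>: "\<eta> \<in> space ?G - Bad" and K: "K \<in> {1..M}" and Z: "Z \<in> clust_mats M K"
          and J: "J \<subseteq> {..<n} \<and> J \<noteq> {}"
        have "J \<in> JS" using J unfolding JS_def by auto
        then have "E K Z J \<subseteq> Bad" unfolding Bad_def using K Z by blast
        then have "\<eta> \<notin> E K Z J" "\<eta> \<in> space ?G" using \<eta> by auto
        then have "\<not> (2 * real K * C\<psi>^2 * (\<Sum>j\<in>J. (\<nu> j)^2) + 3 * C\<psi>^2 * (MAX j\<in>J. (\<nu> j)^2) * xx K J < quad n M S \<nu> Z J \<eta>)"
          unfolding E_def Ev_def G by auto
        then show "quad n M S \<nu> Z J \<eta> \<le>
           2 * K * C\<psi>^2 * (\<Sum>j\<in>J. (\<nu> j)^2)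
           + 3 * C\<psi>^2 * (MAX j\<in>J. (\<nu> j)^2) *
             (M * ln K + card J * ln (n * exp 1 / card J) + ln (M * n) + \<tau> * ln (1/\<delta>))"
          unfolding xx_def t_def by simp
      qed
    qed
    assume mono: "\<forall>i j. i \<le> j \<and> j < n \<longrightarrow> \<nu> i \<le> \<nu> j"
    have mx: "(MAX j\<in>{..<L}. (\<nu> j)^2) = (\<nu> (L - 1))^2" if L: "L \<in> {1..n}" for L
    proof -
      have le: "(\<nu> j)^2 \<le> (\<nu> (L - 1))^2" if jL: "j \<in> {..<L}" for j
      proof -
        have "j \<le> L - 1 \<and> L - 1 < n" using jL L by auto
        then have "\<nu> j \<le> \<nu> (L - 1)" using mono by blast
        moreover have "0 < \<nu> j" using pos jL L by auto
        ultimately show ?thesis by (intro power_mono) auto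
      qed
      have "L - 1 \<in> {..<L}" using L by auto
      then show ?thesis using le by (intro Max_eqI) auto
    qed
    show "\<forall>K\<in>{1..M}. \<forall>Z\<in>clust_mats M K. \<forall>L\<in>{1..n}.
          (\<exists>\<Omega>\<in>sets ?G. measure ?G \<Omega> \<ge> 1 - \<delta> powr \<tau> \<and>
            (\<forall>\<eta>\<in>\<Omega>. quad n M S \<nu> Z {..<L} \<eta> \<le>
               2 * K * C\<psi>^2 * (\<Sum>j<L. (\<nu> j)^2)
               + 3 * C\<psi>^2 * \<tau> * ln (1/\<delta>) * (\<nu> (L - 1))^2))"
    proof (intro ballI)
      fix K Z L assume K: "K \<in> {1..M}" and Z: "Z \<in> clust_mats M K" and L: "L \<in> {1..n}"
      have "0 \<in> {..<L}" using L by auto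
      then have J: "{..<L} \<subseteq> {..<n}" "{..<L} \<noteq> {}" using L by auto
      show "\<exists>\<Omega>\<in>sets ?G. measure ?G \<Omega> \<ge> 1 - \<delta> powr \<tau> \<and>
            (\<forall>\<eta>\<in>\<Omega>. quad n M S \<nu> Z {..<L} \<eta> \<le>
               2 * K * C\<psi>^2 * (\<Sum>j<L. (\<nu> j)^2)
               + 3 * C\<psi>^2 * \<tau> * ln (1/\<delta>) * (\<nu> (L - 1))^2)"
        using part1[OF Z J] unfolding mx[OF L] t_def by (simp add: mult_ac)
    qed
    show "\<exists>\<Omega>\<in>sets ?G. measure ?G \<Omega> \<ge> 1 - \<delta> powr \<tau> \<and>
          (\<forall>\<eta>\<in>\<Omega>. \<forall>K\<in>{1..M}. \<forall>Z\<in>clust_mats M K. \<forall>L\<in>{1..n}.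
             quad n M S \<nu> Z {..<L} \<eta> \<le>
               2 * K * C\<psi>^2 * (\<Sum>j<L. (\<nu> j)^2)
               + 3 * C\<psi>^2 * (\<nu> (L - 1))^2 *
                 (M * ln K + ln (M * n) + \<tau> * ln (1/\<delta>)))"
    proof -
      define xx where "xx K = real M * ln (real K) + ln (real M * real n) + t" for K :: nat
      define E where "E K Z L = Ev n M S \<nu> C\<psi> K Z {..<L} (xx K)" for K Z L
      have n1: "1 \<le> n" using assms(4) .
      have JL: "{..<L} \<subseteq> {..<n}" "{..<L} \<noteq> {}" if "L \<in> {1..n}" for L
      proof -
        have "0 \<in> {..<L}" using that by auto
        then show "{..<L} \<subseteq> {..<n}" "{..<L} \<noteq> {}" using that by auto
      qed
      have lvl3: "measure ?G (\<Union>L\<in>{1..n}. E K Z L) \<le> (\<Sum>L\<in>{1..n}. exp (-t) / (real K ^ M * (real M * real n)))"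
          "(\<Union>L\<in>{1..n}. E K Z L) \<in> sets ?G"
        if K: "K \<in> {1..M}" and Z: "Z \<in> clust_mats M K" for K Z
      proof -
        have ev: "E K Z L \<in> sets ?G" "measure ?G (E K Z L) \<le> exp (-t) / (real K ^ M * (real M * real n))" if "L \<in> {1..n}" for L
        proof -
          note ee = event[OF Z Sc Cc JL[OF that] pos M0, of "xx K"]
          show "E K Z L \<in> sets ?G" using ee(1) unfolding E_def G .
          have "exp (- xx K) = exp (-t) / (real K ^ M * (real M * real n))"
            unfolding xx_def using K n1 assms(5) by (intro exp_weight2) auto
          then show "measure ?G (E K Z L) \<le> exp (-t) / (real K ^ M * (real M * real n))"
            using ee(2) unfolding E_def G by simp
        qed
        show "measure ?G (\<Union>L\<in>{1..n}. E K Z L) \<le> (\<Sum>L\<in>{1..n}. exp (-t) / (real K ^ M * (real M * real n)))"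
          by (rule union_bound(1)[OF _ ev(1) ev(2)]) auto
        show "(\<Union>L\<in>{1..n}. E K Z L) \<in> sets ?G" by (rule union_bound(2)[OF _ ev(1) ev(2)]) auto
      qed
      have lvl2: "measure ?G (\<Union>Z\<in>clust_mats M K. \<Union>L\<in>{1..n}. E K Z L) \<le> exp (-t) / real M"
          "(\<Union>Z\<in>clust_mats M K. \<Union>L\<in>{1..n}. E K Z L) \<in> sets ?G"
        if K: "K \<in> {1..M}" for K
      proof -
        have "measure ?G (\<Union>Z\<in>clust_mats M K. \<Union>L\<in>{1..n}. E K Z L) \<le> (\<Sum>Z\<in>clust_mats M K. (\<Sum>L\<in>{1..n}. exp (-t) / (real K ^ M * (real M * real n))))"
          by (rule union_bound(1)[OF clust_card(1) lvl3(2)[OF K] lvl3(1)[OF K]])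
        also have "\<dots> = real (card (clust_mats M K)) * (exp (-t) / (real K ^ M * (real M * real n)) * real n)"
          by simp
        also have "\<dots> \<le> real K ^ M * (exp (-t) / (real K ^ M * (real M * real n)) * real n)"
          using clust_card(2)[of M K] by (intro mult_right_mono) (auto simp flip: of_nat_power)
        also have "\<dots> = exp (-t) / real M" using K n1 by (simp add: field_simps)
        finally show "measure ?G (\<Union>Z\<in>clust_mats M K. \<Union>L\<in>{1..n}. E K Z L) \<le> exp (-t) / real M" .
        show "(\<Union>Z\<in>clust_mats M K. \<Union>L\<in>{1..n}. E K Z L) \<in> sets ?G"
          by (rule union_bound(2)[OF clust_card(1) lvl3(2)[OF K] lvl3(1)[OF K]])
      qed
      define Bad where "Bad = (\<Union>K\<in>{1..M}. \<Union>Z\<in>clust_mats M K. \<Union>L\<in>{1..n}. E K Z L)"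
      have "measure ?G Bad \<le> (\<Sum>K\<in>{1..M}. exp (-t) / real M)"
        unfolding Bad_def by (rule union_bound(1)[OF _ lvl2(2) lvl2(1)]) auto
      also have "\<dots> = exp (-t)" using M0 by simp
      finally have mB: "measure ?G Bad \<le> exp (-t)" .
      have sB: "Bad \<in> sets ?G" unfolding Bad_def by (rule union_bound(2)[OF _ lvl2(2) lvl2(1)]) auto
      show ?thesis
      proof (intro bexI[of _ "space ?G - Bad"] conjI ballI)
        show "space ?G - Bad \<in> sets ?G" using sB by auto
        show "1 - \<delta> powr \<tau> \<le> measure ?G (space ?G - Bad)" using sB mB by (simp add: prob_compl dt)
        fix \<eta> K Z L assume \<eta>: "\<eta> \<in> space ?G - Bad" and K: "K \<in> {1..M}" and Z: "Z \<in> clust_mats M K"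
          and L: "L \<in> {1..n}"
        have "E K Z L \<subseteq> Bad" unfolding Bad_def using K Z L by blast
        then have "\<eta> \<notin> E K Z L" "\<eta> \<in> space ?G" using \<eta> by auto
        then have "\<not> (2 * real K * C\<psi>^2 * (\<Sum>j\<in>{..<L}. (\<nu> j)^2) + 3 * C\<psi>^2 * (MAX j\<in>{..<L}. (\<nu> j)^2) * xx K < quad n M S \<nu> Z {..<L} \<eta>)"
          unfolding E_def Ev_def G by auto
        then show "quad n M S \<nu> Z {..<L} \<eta> \<le>
               2 * K * C\<psi>^2 * (\<Sum>j<L. (\<nu> j)^2)
               + 3 * C\<psi>^2 * (\<nu> (L - 1))^2 *
                 (M * ln K + ln (M * n) + \<tau> * ln (1/\<delta>))"
          unfolding xx_def t_def mx[OF L] by simp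
      qed
    qed
  qed
qed


end
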